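(* The Lie algebra $\operatorname{Ker}\psi_1$, with the bracket $[(a,\gamma),(b,\varepsilon)]=(b,\varepsilon^{(a,\gamma)})-(a,\gamma^{(b,\varepsilon)})$, is isomorphic to the Lie algebra $\operatorname{Der}_{E^e}(\Lambda)$ of derivations of $\Lambda$ which are $E$-bimodule morphisms, with the commutator bracket.
   Context: Let $k$ be an algebraically closed field and $Q$ a finite quiver; $Q_n$ is the set of paths of length $n$ ($Q_0$ = vertices, $Q_1$ = arrows), $s(\gamma),t(\gamma)$ are source and terminus of a path $\gamma$; in $kQ$, $\beta\alpha$ is the concatenation "first $\alpha$, then $\beta$" if $t(\alpha)=s(\beta)$, and $0$ otherwise. Let $Z$ be a minimal set of paths of length $\ge 2$ (no proper subpath of an element of $Z$ lies in $Z$) such that $\Lambda=kQ/\langle Z\rangle$ is finite dimensional, and let $E\subset\Lambda$ be the subalgebra spanned by the (classes of the) vertices. Let $B$ be the set of paths (vertices included) not containing any element of $Z$ as a subpath; its classes form a basis of $\Lambda$. Paths are parallel if they have the same source and terminus; for sets of paths $X,Y$, $X//Y$ is the set of pairs $(\varepsilon,\gamma)\in X\times Y$ of parallel paths and $k(X//Y)$ the vector space with basis $X//Y$. For a path $\varepsilon$ and $(a,\gamma)\in Q_1//B$, $\varepsilon^{(a,\gamma)}$ is the sum of all paths in $B$ obtained by replacing one occurrence of $a$ in $\varepsilon$ by $\gamma$ ($0$ if none); if $\varepsilon^{(a,\gamma)}=\sum_i\varepsilon_i$ and $\eta$ is parallel to $\varepsilon$, $(\eta,\varepsilon^{(a,\gamma)}):=\sum_i(\eta,\varepsilon_i)$.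 The map $\psi_1:k(Q_1//B)\to k(Z//B)$ is $(a,\gamma)\mapsto\sum_{p\in Z}(p,p^{(a,\gamma)})$, and the bracket on $k(Q_1//B)$ is extended bilinearly from basis elements; $\operatorname{Ker}\psi_1$ is closed under it. *)

theory Defs
  imports "HOL-Computational_Algebra.Polynomial"
begin

text \<open>A finite quiver is given by a finite type of vertices 'v, a finite type of
arrows 'a, and source/terminus maps src tgt :: 'a => 'v.
A path is a pair (v, as): its source vertex v and the list of its arrows in the
order in which they are traversed.  (v, []) is the trivial path at v.\<close>

type_synonym ('v,'a) path = "'v \<times> 'a list"

definition is_path :: "('a \<Rightarrow> 'v) \<Rightarrow> ('a \<Rightarrow> 'v) \<Rightarrow> ('v,'a) path \<Rightarrow> bool" where
  "is_path src tgt p \<longleftrightarrow>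
     (case p of (v, as) \<Rightarrow>
        (as \<noteq> [] \<longrightarrow> src (hd as) = v) \<and>
        (\<forall>i. Suc i < length as \<longrightarrow> tgt (as ! i) = src (as ! Suc i)))"

definition psrc :: "('v,'a) path \<Rightarrow> 'v" where
  "psrc p = fst p"

definition ptgt :: "('a \<Rightarrow> 'v) \<Rightarrow> ('v,'a) path \<Rightarrow> 'v" where
  "ptgt tgt p = (if snd p = [] then fst p else tgt (last (snd p)))"

definition plen :: "('v,'a) path \<Rightarrow> nat" where
  "plen p = length (snd p)"

text \<open>Concatenation beta alpha: first alpha, then beta (meaningful if t(alpha) = s(beta)).\<close>
definition pcat :: "('v,'a) path \<Rightarrow> ('v,'a) path \<Rightarrow> ('v,'a) path" where
  "pcat \<beta> \<alpha> = (fst \<alpha>, snd \<alpha> @ snd \<beta>)"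

definition arrow_path :: "('a \<Rightarrow> 'v) \<Rightarrow> 'a \<Rightarrow> ('v,'a) path" where
  "arrow_path src a = (src a, [a])"

definition parallel :: "('a \<Rightarrow> 'v) \<Rightarrow> ('v,'a) path \<Rightarrow> ('v,'a) path \<Rightarrow> bool" where
  "parallel tgt p q \<longleftrightarrow> psrc p = psrc q \<and> ptgt tgt p = ptgt tgt q"

definition subpath :: "('a \<Rightarrow> 'v) \<Rightarrow> ('a \<Rightarrow> 'v) \<Rightarrow> ('v,'a) path \<Rightarrow> ('v,'a) path \<Rightarrow> bool" where
  "subpath src tgt \<gamma> \<delta> \<longleftrightarrow>
     (\<exists>\<rho> \<sigma>. is_path src tgt \<rho> \<and> is_path src tgt \<sigma> \<and>
        ptgt tgt \<sigma> = psrc \<gamma> \<and> ptgt tgt \<gamma> = psrc \<rho> \<and> \<delta> = pcat \<rho> (pcat \<gamma> \<sigma>))"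

definition minimal_relations :: "('a \<Rightarrow> 'v) \<Rightarrow> ('a \<Rightarrow> 'v) \<Rightarrow> ('v,'a) path set \<Rightarrow> bool" where
  "minimal_relations src tgt Z \<longleftrightarrow>
     (\<forall>p\<in>Z. is_path src tgt p \<and> plen p \<ge> 2) \<and>
     (\<forall>p\<in>Z. \<forall>q\<in>Z. subpath src tgt q p \<longrightarrow> q = p)"

definition Bpaths :: "('a \<Rightarrow> 'v) \<Rightarrow> ('a \<Rightarrow> 'v) \<Rightarrow> ('v,'a) path set \<Rightarrow> ('v,'a) path set" where
  "Bpaths src tgt Z = {p. is_path src tgt p \<and> (\<forall>z\<in>Z. \<not> subpath src tgt z p)}"

text \<open>The monomial algebra Lambda = kQ/<Z>, realised on its basis B:
elements are coefficient functions supported on B, and the product of two basis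
paths is their concatenation if defined and in B, and 0 otherwise.\<close>
definition Lam :: "('a \<Rightarrow> 'v) \<Rightarrow> ('a \<Rightarrow> 'v) \<Rightarrow> ('v,'a) path set \<Rightarrow> (('v,'a) path \<Rightarrow> 'k::field) set" where
  "Lam src tgt Z = {x. \<forall>p. p \<notin> Bpaths src tgt Z \<longrightarrow> x p = 0}"

definition lam_mult :: "('a \<Rightarrow> 'v) \<Rightarrow> ('a \<Rightarrow> 'v) \<Rightarrow> ('v,'a) path set \<Rightarrow>
    (('v,'a) path \<Rightarrow> 'k::field) \<Rightarrow> (('v,'a) path \<Rightarrow> 'k) \<Rightarrow> (('v,'a) path \<Rightarrow> 'k)" where
  "lam_mult src tgt Z x y = (\<lambda>\<delta>.
     if \<delta> \<in> Bpaths src tgt Z then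
       (\<Sum>(\<beta>,\<alpha>)\<in>{(\<beta>,\<alpha>). \<beta> \<in> Bpaths src tgt Z \<and> \<alpha> \<in> Bpaths src tgt Z \<and>
                         ptgt tgt \<alpha> = psrc \<beta> \<and> pcat \<beta> \<alpha> = \<delta>}. x \<beta> * y \<alpha>)
     else 0)"

definition vtx :: "'v \<Rightarrow> (('v,'a) path \<Rightarrow> 'k::field)" where
  "vtx v = (\<lambda>p. if p = (v, []) then 1 else 0)"

text \<open>Der_{E^e}(Lambda): k-linear derivations of Lambda which are E-bimodule maps.
They are represented as functions that vanish outside Lambda (extensional).\<close>
definition Der_E :: "('a \<Rightarrow> 'v) \<Rightarrow> ('a \<Rightarrow> 'v) \<Rightarrow> ('v,'a) path set \<Rightarrow>
    ((('v,'a) path \<Rightarrow> 'k::field) \<Rightarrow> (('v,'a) path \<Rightarrow> 'k)) set" where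
  "Der_E src tgt Z = {D.
     (\<forall>x\<in>Lam src tgt Z. D x \<in> Lam src tgt Z) \<and>
     (\<forall>x. x \<notin> Lam src tgt Z \<longrightarrow> D x = (\<lambda>_. 0)) \<and>
     (\<forall>x\<in>Lam src tgt Z. \<forall>y\<in>Lam src tgt Z. D (\<lambda>p. x p + y p) = (\<lambda>p. D x p + D y p)) \<and>
     (\<forall>c. \<forall>x\<in>Lam src tgt Z. D (\<lambda>p. c * x p) = (\<lambda>p. c * D x p)) \<and>
     (\<forall>x\<in>Lam src tgt Z. \<forall>y\<in>Lam src tgt Z.
        D (lam_mult src tgt Z x y) =
          (\<lambda>p. lam_mult src tgt Z (D x) y p + lam_mult src tgt Z x (D y) p)) \<and>
     (\<forall>v. \<forall>x\<in>Lam src tgt Z.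
        D (lam_mult src tgt Z (vtx v) x) = lam_mult src tgt Z (vtx v) (D x) \<and>
        D (lam_mult src tgt Z x (vtx v)) = lam_mult src tgt Z (D x) (vtx v))}"

definition commutator :: "(('p \<Rightarrow> 'k::field) \<Rightarrow> ('p \<Rightarrow> 'k)) \<Rightarrow> (('p \<Rightarrow> 'k) \<Rightarrow> ('p \<Rightarrow> 'k)) \<Rightarrow>
    (('p \<Rightarrow> 'k) \<Rightarrow> ('p \<Rightarrow> 'k))" where
  "commutator D1 D2 = (\<lambda>x p. D1 (D2 x) p - D2 (D1 x) p)"

definition Q1B :: "('a \<Rightarrow> 'v) \<Rightarrow> ('a \<Rightarrow> 'v) \<Rightarrow> ('v,'a) path set \<Rightarrow> ('a \<times> ('v,'a) path) set" where
  "Q1B src tgt Z = {(a, \<gamma>). \<gamma> \<in> Bpaths src tgt Z \<and> parallel tgt (arrow_path src a) \<gamma>}"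

definition replace_at :: "('v,'a) path \<Rightarrow> nat \<Rightarrow> ('v,'a) path \<Rightarrow> ('v,'a) path" where
  "replace_at \<epsilon> i \<gamma> = (fst \<epsilon>, take i (snd \<epsilon>) @ snd \<gamma> @ drop (Suc i) (snd \<epsilon>))"

text \<open>eps^(a,gamma): the sum of all paths in B obtained by replacing one occurrence of
a in eps by gamma, as a coefficient function on paths (counted with multiplicity).\<close>
definition repl :: "('a \<Rightarrow> 'v) \<Rightarrow> ('a \<Rightarrow> 'v) \<Rightarrow> ('v,'a) path set \<Rightarrow>
    ('v,'a) path \<Rightarrow> 'a \<Rightarrow> ('v,'a) path \<Rightarrow> (('v,'a) path \<Rightarrow> 'k::field)" where
  "repl src tgt Z \<epsilon> a \<gamma> = (\<lambda>\<delta>. of_nat (card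
     {i. i < length (snd \<epsilon>) \<and> snd \<epsilon> ! i = a \<and> replace_at \<epsilon> i \<gamma> = \<delta> \<and>
         \<delta> \<in> Bpaths src tgt Z}))"

definition kQ1B :: "('a \<Rightarrow> 'v) \<Rightarrow> ('a \<Rightarrow> 'v) \<Rightarrow> ('v,'a) path set \<Rightarrow> ('a \<times> ('v,'a) path \<Rightarrow> 'k::field) set" where
  "kQ1B src tgt Z = {f. \<forall>q. q \<notin> Q1B src tgt Z \<longrightarrow> f q = 0}"

definition psi1 :: "('a \<Rightarrow> 'v) \<Rightarrow> ('a \<Rightarrow> 'v) \<Rightarrow> ('v,'a) path set \<Rightarrow>
    ('a \<times> ('v,'a) path \<Rightarrow> 'k::field) \<Rightarrow> (('v,'a) path \<times> ('v,'a) path \<Rightarrow> 'k)" where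
  "psi1 src tgt Z f = (\<lambda>(p, \<delta>).
     if p \<in> Z then (\<Sum>(a,\<gamma>)\<in>Q1B src tgt Z. f (a,\<gamma>) * repl src tgt Z p a \<gamma> \<delta>) else 0)"

definition Ker_psi1 :: "('a \<Rightarrow> 'v) \<Rightarrow> ('a \<Rightarrow> 'v) \<Rightarrow> ('v,'a) path set \<Rightarrow> ('a \<times> ('v,'a) path \<Rightarrow> 'k::field) set" where
  "Ker_psi1 src tgt Z = {f \<in> kQ1B src tgt Z. psi1 src tgt Z f = (\<lambda>_. 0)}"

definition bracket :: "('a \<Rightarrow> 'v) \<Rightarrow> ('a \<Rightarrow> 'v) \<Rightarrow> ('v,'a) path set \<Rightarrow>
    ('a \<times> ('v,'a) path \<Rightarrow> 'k::field) \<Rightarrow> ('a \<times> ('v,'a) path \<Rightarrow> 'k) \<Rightarrow> ('a \<times> ('v,'a) path \<Rightarrow> 'k)" where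
  "bracket src tgt Z f g = (\<lambda>(c, \<delta>).
     \<Sum>(a,\<gamma>)\<in>Q1B src tgt Z. \<Sum>(b,\<epsilon>)\<in>Q1B src tgt Z.
        f (a,\<gamma>) * g (b,\<epsilon>) *
          ((if c = b then repl src tgt Z \<epsilon> a \<gamma> \<delta> else 0) -
           (if c = a then repl src tgt Z \<gamma> b \<epsilon> \<delta> else 0)))"

end

theory Submission
  imports Defs
begin


fun wlk :: "('a \<Rightarrow> 'v) \<Rightarrow> ('a \<Rightarrow> 'v) \<Rightarrow> 'v \<Rightarrow> 'a list \<Rightarrow> bool" where
  "wlk src tgt v [] = True"
| "wlk src tgt v (a#as) = (src a = v \<and> wlk src tgt (tgt a) as)"

fun endv :: "('a \<Rightarrow> 'v) \<Rightarrow> 'v \<Rightarrow> 'a list \<Rightarrow> 'v" where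
  "endv tgt v [] = v"
| "endv tgt v (a#as) = endv tgt (tgt a) as"

lemma endv_eq: "endv tgt v as = (if as = [] then v else tgt (last as))"
  by (induction as arbitrary: v) auto

lemma endv_append[simp]: "endv tgt v (xs@ys) = endv tgt (endv tgt v xs) ys"
  by (induction xs arbitrary: v) auto

lemma wlk_append[simp]: "wlk src tgt v (xs@ys) = (wlk src tgt v xs \<and> wlk src tgt (endv tgt v xs) ys)"
  by (induction xs arbitrary: v) auto

lemma ptgt_endv: "ptgt tgt p = endv tgt (fst p) (snd p)"
  by (simp add: ptgt_def endv_eq)

lemma is_path_wlk: "is_path src tgt p = wlk src tgt (fst p) (snd p)"
proof -
  have "is_path src tgt (v,as) = wlk src tgt v as" for v as
  proof (induction as arbitrary: v)
    case Nil then show ?case by (simp add: is_path_def)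
  next
    case (Cons a as)
    have "(\<forall>i. Suc i < length (a#as) \<longrightarrow> tgt ((a#as) ! i) = src ((a#as) ! Suc i)) \<longleftrightarrow>
          (as \<noteq> [] \<longrightarrow> tgt a = src (hd as)) \<and> (\<forall>i. Suc i < length as \<longrightarrow> tgt (as ! i) = src (as ! Suc i))"
      (is "?L \<longleftrightarrow> ?R")
    proof
      assume L: ?L
      show ?R
      proof
        show "as \<noteq> [] \<longrightarrow> tgt a = src (hd as)" using L[rule_format, of 0] by (cases as) auto
        show "\<forall>i. Suc i < length as \<longrightarrow> tgt (as ! i) = src (as ! Suc i)"
          using L by (metis Suc_less_eq length_Cons nth_Cons_Suc)
      qed
    next
      assume R: ?R
      show ?L
      proof (intro allI impI)
        fix i assume "Suc i < length (a#as)"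
        then show "tgt ((a#as) ! i) = src ((a#as) ! Suc i)" using R
          by (cases i) (auto simp: hd_conv_nth)
      qed
    qed
    then show ?case using Cons[of "tgt a"] by (auto simp: is_path_def)
  qed
  then show ?thesis by (cases p) simp
qed

lemma card_split:
  "card {i. i < (m::nat) + n \<and> P i} = card {i. i < m \<and> P i} + card {j. j < n \<and> P (m + j)}"
proof -
  have e: "{i. i < m + n \<and> P i} = {i. i < m \<and> P i} \<union> (\<lambda>j. m + j) ` {j. j < n \<and> P (m + j)}"
  proof (rule set_eqI)
    fix i show "i \<in> {i. i < m + n \<and> P i} \<longleftrightarrow> i \<in> {i. i < m \<and> P i} \<union> (\<lambda>j. m + j) ` {j. j < n \<and> P (m + j)}"
    proof (cases "i < m")
      case False
      have "i = m + (i - m)" using False by simp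
      then have "i \<in> (\<lambda>j. m + j) ` {j. j < n \<and> P (m + j)} \<longleftrightarrow> i < m + n \<and> P i"
        by (metis (mono_tags, lifting) add_less_cancel_left image_iff mem_Collect_eq)
      then show ?thesis using False by auto
    qed auto
  qed
  have "card {i. i < m + n \<and> P i} = card {i. i < m \<and> P i} + card ((\<lambda>j. m + j) ` {j. j < n \<and> P (m + j)})"
    unfolding e by (rule card_Un_disjoint) auto
  also have "card ((\<lambda>j. m + j) ` {j. j < n \<and> P (m + j)}) = card {j. j < n \<and> P (m + j)}"
    by (rule card_image) (auto simp: inj_on_def)
  finally show ?thesis .
qed

lemma sum_card_fiber:
  assumes "finite S" "finite I"
  shows "(\<Sum>s\<in>S. card {i\<in>I. Q i \<and> h i = s}) = card {i\<in>I. Q i \<and> h i \<in> S}"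
proof -
  have "{i\<in>I. Q i \<and> h i \<in> S} = (\<Union>s\<in>S. {i\<in>I. Q i \<and> h i = s})" by auto
  moreover have "card (\<Union>s\<in>S. {i\<in>I. Q i \<and> h i = s}) = (\<Sum>s\<in>S. card {i\<in>I. Q i \<and> h i = s})"
    using assms by (intro card_UN_disjoint) auto
  ultimately show ?thesis by simp
qed

definition bas :: "'p \<Rightarrow> 'p \<Rightarrow> 'k::field" where
  "bas q p = (if p = q then 1 else 0)"

locale quiv =
  fixes src tgt :: "'a::finite \<Rightarrow> 'v" and Z :: "('v,'a) path set"
  assumes minZ: "minimal_relations src tgt Z" and finB: "finite (Bpaths src tgt Z)"
begin

abbreviation "BB \<equiv> Bpaths src tgt Z"

lemma Z_props: "z \<in> Z \<Longrightarrow> wlk src tgt (fst z) (snd z) \<and> length (snd z) \<ge> 2"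
  using minZ by (auto simp: minimal_relations_def is_path_wlk plen_def)

lemma wlk_hd: "wlk src tgt v zs \<Longrightarrow> zs \<noteq> [] \<Longrightarrow> src (hd zs) = v"
  by (cases zs) auto

lemma subpath_infix:
  assumes "z \<in> Z" "wlk src tgt (fst d) (snd d)"
  shows "subpath src tgt z d \<longleftrightarrow> (\<exists>xs ys. snd d = xs @ snd z @ ys)"
proof
  assume "subpath src tgt z d"
  then show "\<exists>xs ys. snd d = xs @ snd z @ ys" unfolding subpath_def pcat_def by force
next
  assume "\<exists>xs ys. snd d = xs @ snd z @ ys"
  then obtain xs ys where e: "snd d = xs @ snd z @ ys" by blast
  have zp: "wlk src tgt (fst z) (snd z)" "snd z \<noteq> []" using Z_props[OF assms(1)] by auto
  from assms(2) e have w: "wlk src tgt (fst d) xs" "wlk src tgt (endv tgt (fst d) xs) (snd z)"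
     "wlk src tgt (endv tgt (endv tgt (fst d) xs) (snd z)) ys" by auto
  have fz: "fst z = endv tgt (fst d) xs" using wlk_hd[OF w(2) zp(2)] wlk_hd[OF zp] by simp
  let ?s = "(fst d, xs)" and ?r = "(endv tgt (fst z) (snd z), ys)"
  have "is_path src tgt ?s" "is_path src tgt ?r" using w fz by (auto simp: is_path_wlk)
  moreover have "ptgt tgt ?s = psrc z" "ptgt tgt z = psrc ?r" using fz by (auto simp: ptgt_endv psrc_def)
  moreover have "d = pcat ?r (pcat z ?s)" using e by (cases d) (auto simp: pcat_def)
  ultimately show "subpath src tgt z d" unfolding subpath_def by blast
qed

lemma inB_iff: "d \<in> BB \<longleftrightarrow> wlk src tgt (fst d) (snd d) \<and> \<not> (\<exists>z\<in>Z. \<exists>xs ys. snd d = xs @ snd z @ ys)"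
proof -
  have "d \<in> BB \<longleftrightarrow> wlk src tgt (fst d) (snd d) \<and> (\<forall>z\<in>Z. \<not> subpath src tgt z d)"
    by (simp add: Bpaths_def is_path_wlk)
  also have "\<dots> \<longleftrightarrow> wlk src tgt (fst d) (snd d) \<and> \<not> (\<exists>z\<in>Z. \<exists>xs ys. snd d = xs @ snd z @ ys)"
    using subpath_infix by blast
  finally show ?thesis .
qed


lemma Q1B_iff: "(a,g) \<in> Q1B src tgt Z \<longleftrightarrow> g \<in> BB \<and> fst g = src a \<and> ptgt tgt g = tgt a"
  by (auto simp: Q1B_def parallel_def arrow_path_def psrc_def ptgt_def)

lemma B_wlk: "g \<in> BB \<Longrightarrow> wlk src tgt (fst g) (snd g)"
  using inB_iff by blast

lemma replace_wlk:
  assumes "wlk src tgt v as" "i < length as" "as ! i = a" "(a,g) \<in> Q1B src tgt Z"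
  shows "wlk src tgt v (snd (replace_at (v,as) i g)) \<and> endv tgt v (snd (replace_at (v,as) i g)) = endv tgt v as"
proof -
  have as: "as = take i as @ [a] @ drop (Suc i) as" using assms(2,3) id_take_nth_drop by fastforce
  have g: "g \<in> BB" "fst g = src a" "ptgt tgt g = tgt a" using assms(4) Q1B_iff by auto
  have gw: "wlk src tgt (src a) (snd g)" "endv tgt (src a) (snd g) = tgt a"
    using B_wlk[OF g(1)] g by (auto simp: ptgt_endv)
  have "wlk src tgt v (take i as @ [a] @ drop (Suc i) as)" using assms(1) as by simp
  then have w: "wlk src tgt v (take i as)" "src a = endv tgt v (take i as)" "wlk src tgt (tgt a) (drop (Suc i) as)"
    by auto
  have "endv tgt v as = endv tgt v (take i as @ [a] @ drop (Suc i) as)" using as by simp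
  then show ?thesis using w gw by (simp add: replace_at_def)
qed

lemma B_infix_closed:
  assumes "d \<in> BB" "snd d = xs @ m @ ys" "wlk src tgt w m"
  shows "(w, m) \<in> BB"
proof -
  have "\<not> (\<exists>z\<in>Z. \<exists>xs ys. snd d = xs @ snd z @ ys)" using assms(1) inB_iff by blast
  then have "\<not> (\<exists>z\<in>Z. \<exists>xs ys. m = xs @ snd z @ ys)" using assms(2) by (metis append.assoc)
  then show ?thesis using assms(3) inB_iff by auto
qed

lemma repl_nz:
  assumes "repl src tgt Z p a g d \<noteq> (0::'k::field)"
  shows "d \<in> BB \<and> (\<exists>i<length (snd p). snd p ! i = a \<and> replace_at p i g = d)"
proof -
  have "{i. i < length (snd p) \<and> snd p ! i = a \<and> replace_at p i g = d \<and> d \<in> BB} \<noteq> {}"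
    using assms unfolding repl_def by (metis card.empty of_nat_0)
  then show ?thesis by blast
qed

definition Df :: "('a \<times> ('v,'a) path \<Rightarrow> 'k::field) \<Rightarrow> ('v,'a) path \<Rightarrow> ('v,'a) path \<Rightarrow> 'k" where
  "Df f p d = (\<Sum>q\<in>Q1B src tgt Z. f q * repl src tgt Z p (fst q) (snd q) d)"

lemma Df_nz:
  fixes f :: "'a \<times> ('v,'a) path \<Rightarrow> 'k::field"
  assumes "Df f p d \<noteq> 0" "wlk src tgt (fst p) (snd p)"
  shows "d \<in> BB \<and> fst d = fst p \<and> ptgt tgt d = ptgt tgt p"
proof -
  have "\<exists>q. q \<in> Q1B src tgt Z \<and> repl src tgt Z p (fst q) (snd q) d \<noteq> (0::'k)"
  proof (rule ccontr)
    assume "\<nexists>q. q \<in> Q1B src tgt Z \<and> repl src tgt Z p (fst q) (snd q) d \<noteq> (0::'k)"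
    then have "\<forall>q\<in>Q1B src tgt Z. f q * repl src tgt Z p (fst q) (snd q) d = 0" by auto
    then have "Df f p d = 0" unfolding Df_def by (rule sum.neutral)
    then show False using assms(1) by simp
  qed
  then obtain q where q: "q \<in> Q1B src tgt Z" "repl src tgt Z p (fst q) (snd q) d \<noteq> (0::'k)" by blast
  then obtain i where i: "d \<in> BB" "i < length (snd p)" "snd p ! i = fst q" "replace_at p i (snd q) = d"
    using repl_nz by blast
  have "wlk src tgt (fst p) (snd (replace_at (fst p, snd p) i (snd q))) \<and>
     endv tgt (fst p) (snd (replace_at (fst p, snd p) i (snd q))) = endv tgt (fst p) (snd p)"
    using replace_wlk[OF assms(2) i(2,3)] q(1) by simp
  then show ?thesis using i by (auto simp: replace_at_def ptgt_endv)
qed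



abbreviation "LL \<equiv> Lam src tgt Z"
abbreviation "lm \<equiv> lam_mult src tgt Z"

lemma lam_mult_alt:
  "lm x y d = (if d \<in> BB then (\<Sum>b\<in>BB. \<Sum>a\<in>BB. if ptgt tgt a = psrc b \<and> pcat b a = d then x b * y a else 0) else 0)"
proof (cases "d \<in> BB")
  case True
  let ?S = "{(b,a). b \<in> BB \<and> a \<in> BB \<and> ptgt tgt a = psrc b \<and> pcat b a = d}"
  have S: "?S = {p \<in> BB \<times> BB. ptgt tgt (snd p) = psrc (fst p) \<and> pcat (fst p) (snd p) = d}" by auto
  have "(\<Sum>(b,a)\<in>?S. x b * y a) = (\<Sum>p\<in>BB \<times> BB. if ptgt tgt (snd p) = psrc (fst p) \<and> pcat (fst p) (snd p) = d then x (fst p) * y (snd p) else 0)"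
    unfolding S using finB by (subst sum.inter_filter) (auto intro!: sum.cong simp: case_prod_beta split: prod.splits)
  also have "\<dots> = (\<Sum>b\<in>BB. \<Sum>a\<in>BB. if ptgt tgt a = psrc b \<and> pcat b a = d then x b * y a else 0)"
    by (subst sum.cartesian_product) (simp add: case_prod_beta)
  finally show ?thesis using True by (simp add: lam_mult_def)
qed (simp add: lam_mult_def)

lemma lam_bas_left:
  assumes "b \<in> BB"
  shows "lm (bas b) y d = (if d \<in> BB then (\<Sum>a\<in>BB. if ptgt tgt a = psrc b \<and> pcat b a = d then y a else 0) else 0)"
proof -
  have "(\<Sum>b'\<in>BB. \<Sum>a\<in>BB. if ptgt tgt a = psrc b' \<and> pcat b' a = d then bas b b' * y a else 0)
      = (\<Sum>b'\<in>BB. if b' = b then (\<Sum>a\<in>BB. if ptgt tgt a = psrc b \<and> pcat b a = d then y a else 0) else 0)"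
  proof (rule sum.cong[OF refl])
    fix b' show "(\<Sum>a\<in>BB. if ptgt tgt a = psrc b' \<and> pcat b' a = d then bas b b' * y a else 0) =
         (if b' = b then (\<Sum>a\<in>BB. if ptgt tgt a = psrc b \<and> pcat b a = d then y a else 0) else 0)"
      by (cases "b' = b") (simp_all add: bas_def cong: if_cong)
  qed
  also have "\<dots> = (\<Sum>a\<in>BB. if ptgt tgt a = psrc b \<and> pcat b a = d then y a else 0)"
    using finB assms by (simp add: sum.delta)
  finally show ?thesis by (simp add: lam_mult_alt)
qed

lemma lam_bas_right:
  assumes "a \<in> BB"
  shows "lm x (bas a) d = (if d \<in> BB then (\<Sum>b\<in>BB. if ptgt tgt a = psrc b \<and> pcat b a = d then x b else 0) else 0)"
proof -
  have "(\<Sum>b\<in>BB. \<Sum>a'\<in>BB. if ptgt tgt a' = psrc b \<and> pcat b a' = d then x b * bas a a' else 0)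
      = (\<Sum>b\<in>BB. \<Sum>a'\<in>BB. if a' = a then (if ptgt tgt a = psrc b \<and> pcat b a = d then x b else 0) else 0)"
    by (intro sum.cong) (auto simp: bas_def cong: if_cong)
  also have "\<dots> = (\<Sum>b\<in>BB. if ptgt tgt a = psrc b \<and> pcat b a = d then x b else 0)"
    using finB assms by (simp add: sum.delta)
  finally show ?thesis by (simp add: lam_mult_alt)
qed

lemma lam_bas_ind:
  assumes "b \<in> BB" "a \<in> BB"
  shows "lm (bas b) (bas a) = (if ptgt tgt a = psrc b \<and> pcat b a \<in> BB then bas (pcat b a) else (\<lambda>_. 0))"
proof
  fix d
  have "(\<Sum>a'\<in>BB. if ptgt tgt a' = psrc b \<and> pcat b a' = d then bas a a' else 0)
     = (\<Sum>a'\<in>BB. if a' = a then (if ptgt tgt a = psrc b \<and> pcat b a = d then 1 else 0) else 0)"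
    by (intro sum.cong) (auto simp: bas_def cong: if_cong)
  also have "\<dots> = (if ptgt tgt a = psrc b \<and> pcat b a = d then 1 else 0)"
    using finB assms by (simp add: sum.delta)
  finally show "lm (bas b) (bas a) d = (if ptgt tgt a = psrc b \<and> pcat b a \<in> BB then bas (pcat b a) else (\<lambda>_. 0)) d"
    using assms by (auto simp: lam_bas_left bas_def)
qed

lemma bas_Lam: "b \<in> BB \<Longrightarrow> bas b \<in> LL"
  by (auto simp: Lam_def bas_def)

lemma zero_Lam: "(\<lambda>_. 0) \<in> LL"
  by (auto simp: Lam_def)

lemma add_Lam: "x \<in> LL \<Longrightarrow> y \<in> LL \<Longrightarrow> (\<lambda>p. x p + y p) \<in> LL"
  by (auto simp: Lam_def)

lemma diff_Lam: "x \<in> LL \<Longrightarrow> y \<in> LL \<Longrightarrow> (\<lambda>p. x p - y p) \<in> LL"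
  by (auto simp: Lam_def)

lemma smult_Lam: "x \<in> LL \<Longrightarrow> (\<lambda>p. c * x p) \<in> LL"
  by (auto simp: Lam_def)

lemma lm_Lam: "lm x y \<in> LL"
  by (auto simp: Lam_def lam_mult_def)

lemma Lam_expand:
  assumes "x \<in> LL"
  shows "x = (\<lambda>p. \<Sum>d\<in>BB. x d * bas d p)"
proof
  fix p
  have "(\<Sum>d\<in>BB. x d * bas d p) = (\<Sum>d\<in>BB. if d = p then x p else 0)"
    by (intro sum.cong) (auto simp: bas_def)
  moreover have "p \<notin> BB \<Longrightarrow> x p = 0" using assms unfolding Lam_def by blast
  then have "(\<Sum>d\<in>BB. if d = p then x p else 0) = x p" using finB by (cases "p \<in> BB") (simp_all add: sum.delta')
  ultimately show "x p = (\<Sum>d\<in>BB. x d * bas d p)" by simp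
qed

lemma lm_sum_left:
  assumes "finite I"
  shows "lm (\<lambda>p. \<Sum>i\<in>I. c i * u i p) y = (\<lambda>d. \<Sum>i\<in>I. c i * lm (u i) y d)"
proof
  fix d
  show "lm (\<lambda>p. \<Sum>i\<in>I. c i * u i p) y d = (\<Sum>i\<in>I. c i * lm (u i) y d)"
  proof (cases "d \<in> BB")
    case True
    have "(\<Sum>b\<in>BB. \<Sum>a\<in>BB. if ptgt tgt a = psrc b \<and> pcat b a = d then (\<Sum>i\<in>I. c i * u i b) * y a else 0)
       = (\<Sum>b\<in>BB. \<Sum>a\<in>BB. \<Sum>i\<in>I. if ptgt tgt a = psrc b \<and> pcat b a = d then c i * (u i b * y a) else 0)"
      by (intro sum.cong refl) (auto simp: sum_distrib_right sum_distrib_left mult.assoc mult.left_commute intro!: sum.neutral[symmetric])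
    also have "\<dots> = (\<Sum>b\<in>BB. \<Sum>i\<in>I. \<Sum>a\<in>BB. if ptgt tgt a = psrc b \<and> pcat b a = d then c i * (u i b * y a) else 0)"
      by (rule sum.cong[OF refl], rule sum.swap)
    also have "\<dots> = (\<Sum>i\<in>I. \<Sum>b\<in>BB. \<Sum>a\<in>BB. if ptgt tgt a = psrc b \<and> pcat b a = d then c i * (u i b * y a) else 0)"
      by (rule sum.swap)
    also have "\<dots> = (\<Sum>i\<in>I. c i * (\<Sum>b\<in>BB. \<Sum>a\<in>BB. if ptgt tgt a = psrc b \<and> pcat b a = d then u i b * y a else 0))"
      by (simp add: sum_distrib_left if_distrib cong: if_cong)
    finally show ?thesis using True by (simp add: lam_mult_alt)
  qed (simp add: lam_mult_alt)
qed

lemma lm_sum_right: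
  assumes "finite I"
  shows "lm x (\<lambda>p. \<Sum>i\<in>I. c i * u i p) = (\<lambda>d. \<Sum>i\<in>I. c i * lm x (u i) d)"
proof
  fix d
  show "lm x (\<lambda>p. \<Sum>i\<in>I. c i * u i p) d = (\<Sum>i\<in>I. c i * lm x (u i) d)"
  proof (cases "d \<in> BB")
    case True
    have "(\<Sum>b\<in>BB. \<Sum>a\<in>BB. if ptgt tgt a = psrc b \<and> pcat b a = d then x b * (\<Sum>i\<in>I. c i * u i a) else 0)
       = (\<Sum>b\<in>BB. \<Sum>a\<in>BB. \<Sum>i\<in>I. if ptgt tgt a = psrc b \<and> pcat b a = d then c i * (x b * u i a) else 0)"
      by (intro sum.cong refl) (auto simp: sum_distrib_right sum_distrib_left mult.assoc mult.left_commute intro!: sum.neutral[symmetric])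
    also have "\<dots> = (\<Sum>b\<in>BB. \<Sum>i\<in>I. \<Sum>a\<in>BB. if ptgt tgt a = psrc b \<and> pcat b a = d then c i * (x b * u i a) else 0)"
      by (rule sum.cong[OF refl], rule sum.swap)
    also have "\<dots> = (\<Sum>i\<in>I. \<Sum>b\<in>BB. \<Sum>a\<in>BB. if ptgt tgt a = psrc b \<and> pcat b a = d then c i * (x b * u i a) else 0)"
      by (rule sum.swap)
    also have "\<dots> = (\<Sum>i\<in>I. c i * (\<Sum>b\<in>BB. \<Sum>a\<in>BB. if ptgt tgt a = psrc b \<and> pcat b a = d then x b * u i a else 0))"
      by (simp add: sum_distrib_left if_distrib cong: if_cong)
    finally show ?thesis using True by (simp add: lam_mult_alt)
  qed (simp add: lam_mult_alt)
qed

lemma lm_add_left: "lm (\<lambda>p. u p + v p) y = (\<lambda>d. lm u y d + lm v y d)"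
  by (rule ext) (simp add: lam_mult_def sum.distrib distrib_right case_prod_beta)
lemma lm_add_right: "lm x (\<lambda>p. u p + v p) = (\<lambda>d. lm x u d + lm x v d)"
  by (rule ext) (simp add: lam_mult_def sum.distrib distrib_left case_prod_beta)
lemma lm_diff_left: "lm (\<lambda>p. u p - v p) y = (\<lambda>d. lm u y d - lm v y d)"
  by (rule ext) (simp add: lam_mult_def sum_subtractf left_diff_distrib case_prod_beta)
lemma lm_diff_right: "lm x (\<lambda>p. u p - v p) = (\<lambda>d. lm x u d - lm x v d)"
  by (rule ext) (simp add: lam_mult_def sum_subtractf right_diff_distrib case_prod_beta)
lemma lm_smult_left: "lm (\<lambda>p. c * u p) y = (\<lambda>d. c * lm u y d)"
  by (rule ext) (simp add: lam_mult_def sum_distrib_left mult.assoc case_prod_beta)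
lemma lm_smult_right: "lm x (\<lambda>p. c * u p) = (\<lambda>d. c * lm x u d)"
  by (rule ext) (simp add: lam_mult_def sum_distrib_left mult.left_commute case_prod_beta)
lemma lm_zero_left: "lm (\<lambda>_. 0) y = (\<lambda>_. 0)"
  by (rule ext) (simp add: lam_mult_def)
lemma lm_zero_right: "lm x (\<lambda>_. 0) = (\<lambda>_. 0)"
  by (rule ext) (simp add: lam_mult_def)


lemma Df_def2: "Df f p d = (\<Sum>q\<in>Q1B src tgt Z. f q * of_nat (card
     {i. i < length (snd p) \<and> snd p ! i = fst q \<and> replace_at p i (snd q) = d \<and> d \<in> BB}))"
  by (simp add: Df_def repl_def)

lemma Df_notB: "d \<notin> BB \<Longrightarrow> Df f p d = 0"
  by (simp add: Df_def2)

lemma replace_pcat1: "i < length (snd a) \<Longrightarrow> replace_at (pcat b a) i g = pcat b (replace_at a i g)"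
  by (simp add: replace_at_def pcat_def)

lemma replace_pcat2: "j < length (snd b) \<Longrightarrow> replace_at (pcat b a) (length (snd a) + j) g = pcat (replace_at b j g) a"
  by (simp add: replace_at_def pcat_def)

lemma pcat_inj1: "pcat b x = pcat b y \<longleftrightarrow> x = y"
  by (auto simp: pcat_def prod_eq_iff)

lemma pcat_inj2: "pcat x a = pcat y a \<longleftrightarrow> snd x = snd y"
  by (auto simp: pcat_def prod_eq_iff)

lemma replace_props:
  assumes "p \<in> BB" "i < length (snd p)" "snd p ! i = x" "(x,g) \<in> Q1B src tgt Z"
  shows "wlk src tgt (fst (replace_at p i g)) (snd (replace_at p i g)) \<and> fst (replace_at p i g) = fst p \<and>
         ptgt tgt (replace_at p i g) = ptgt tgt p"
proof -
  have "wlk src tgt (fst p) (snd p)" using assms(1) B_wlk by blast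
  from replace_wlk[OF this assms(2,3,4)] show ?thesis
    by (simp add: replace_at_def ptgt_endv)
qed

lemma B_pcat_right: "d \<in> BB \<Longrightarrow> pcat b a' = d \<Longrightarrow> wlk src tgt (fst a') (snd a') \<Longrightarrow> a' \<in> BB"
  using B_infix_closed[of d "[]" "snd a'" "snd b" "fst a'"] by (auto simp: pcat_def)

lemma B_pcat_left: "d \<in> BB \<Longrightarrow> pcat b' a = d \<Longrightarrow> wlk src tgt (fst b') (snd b') \<Longrightarrow> b' \<in> BB"
  using B_infix_closed[of d "snd a" "snd b'" "[]" "fst b'"] by (auto simp: pcat_def)

lemma psrc_pcat: "psrc (pcat b a) = psrc a"
  by (simp add: pcat_def psrc_def)

lemma Leib_comb:
  fixes f :: "'a \<times> ('v,'a) path \<Rightarrow> 'k::field"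
  assumes b: "b \<in> BB" and a: "a \<in> BB" and ba: "ptgt tgt a = psrc b"
  shows "Df f (pcat b a) d = lm (Df f b) (bas a) d + lm (bas b) (Df f a) d"
proof (cases "d \<in> BB")
  case False
  then show ?thesis by (simp add: Df_notB lam_mult_def)
next
  case dB: True
  let ?Q = "Q1B src tgt Z"
  define Sa where "Sa = {a'\<in>BB. ptgt tgt a' = psrc b \<and> pcat b a' = d}"
  define Sb where "Sb = {b'\<in>BB. ptgt tgt a = psrc b' \<and> pcat b' a = d}"
  have finSa: "finite Sa" and finSb: "finite Sb" using finB by (auto simp: Sa_def Sb_def)
  define N1 where "N1 q = card {i. i < length (snd a) \<and> snd a ! i = fst q \<and> pcat b (replace_at a i (snd q)) = d}" for q
  define N2 where "N2 q = card {j. j < length (snd b) \<and> snd b ! j = fst q \<and> pcat (replace_at b j (snd q)) a = d}" for q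
  have lhs: "Df f (pcat b a) d = (\<Sum>q\<in>?Q. f q * of_nat (N2 q)) + (\<Sum>q\<in>?Q. f q * of_nat (N1 q))"
  proof -
    have "card {i. i < length (snd (pcat b a)) \<and> snd (pcat b a) ! i = fst q \<and> replace_at (pcat b a) i (snd q) = d \<and> d \<in> BB}
        = N1 q + N2 q" for q
    proof -
      have "card {i. i < length (snd (pcat b a)) \<and> snd (pcat b a) ! i = fst q \<and> replace_at (pcat b a) i (snd q) = d \<and> d \<in> BB}
         = card {i. i < length (snd a) + length (snd b) \<and> (snd a @ snd b) ! i = fst q \<and> replace_at (pcat b a) i (snd q) = d}"
        using dB by (simp add: pcat_def)
      also have "\<dots> = card {i. i < length (snd a) \<and> (snd a @ snd b) ! i = fst q \<and> replace_at (pcat b a) i (snd q) = d}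
          + card {j. j < length (snd b) \<and> (snd a @ snd b) ! (length (snd a) + j) = fst q \<and> replace_at (pcat b a) (length (snd a) + j) (snd q) = d}"
        by (rule card_split)
      also have "card {i. i < length (snd a) \<and> (snd a @ snd b) ! i = fst q \<and> replace_at (pcat b a) i (snd q) = d} = N1 q"
        unfolding N1_def by (rule arg_cong[where f=card]) (auto simp: replace_pcat1 nth_append)
      also have "card {j. j < length (snd b) \<and> (snd a @ snd b) ! (length (snd a) + j) = fst q \<and> replace_at (pcat b a) (length (snd a) + j) (snd q) = d} = N2 q"
        unfolding N2_def by (rule arg_cong[where f=card]) (auto simp: replace_pcat2)
      finally show ?thesis .
    qed
    then show ?thesis by (simp add: Df_def2 sum.distrib[symmetric] distrib_left add.commute)
  qed
  have swap: "(\<Sum>x\<in>S. \<Sum>q\<in>?Q. f q * of_nat (M q x)) = (\<Sum>q\<in>?Q. f q * of_nat (\<Sum>x\<in>S. M q x))" for S and M :: "_ \<Rightarrow> _ \<Rightarrow> nat"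
    by (subst sum.swap) (simp add: sum_distrib_left)
  have r2: "lm (bas b) (Df f a) d = (\<Sum>q\<in>?Q. f q * of_nat (N1 q))"
  proof -
    have "lm (bas b) (Df f a) d = (\<Sum>a'\<in>BB. if ptgt tgt a' = psrc b \<and> pcat b a' = d then Df f a a' else 0)"
      using b dB by (simp add: lam_bas_left)
    also have "\<dots> = (\<Sum>a'\<in>Sa. Df f a a')"
      unfolding Sa_def using finB by (simp add: sum.inter_filter)
    also have "\<dots> = (\<Sum>a'\<in>Sa. \<Sum>q\<in>?Q. f q * of_nat (card {i \<in> {..<length (snd a)}. snd a ! i = fst q \<and> replace_at a i (snd q) = a'}))"
      unfolding Df_def2 by (intro sum.cong refl arg_cong[where f=card] arg_cong[where f=of_nat] arg_cong2[where f="(*)"])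
        (auto simp: Sa_def)
    also have "\<dots> = (\<Sum>q\<in>?Q. f q * of_nat (\<Sum>a'\<in>Sa. card {i \<in> {..<length (snd a)}. snd a ! i = fst q \<and> replace_at a i (snd q) = a'}))"
      by (rule swap)
    also have "\<dots> = (\<Sum>q\<in>?Q. f q * of_nat (card {i \<in> {..<length (snd a)}. snd a ! i = fst q \<and> replace_at a i (snd q) \<in> Sa}))"
      by (intro sum.cong refl arg_cong2[where f="(*)"] arg_cong[where f=of_nat] sum_card_fiber finSa finite_lessThan)
    also have "\<dots> = (\<Sum>q\<in>?Q. f q * of_nat (N1 q))"
    proof (intro sum.cong refl arg_cong[where f=of_nat] arg_cong2[where f="(*)"])
      fix q assume q: "q \<in> ?Q"
      show "card {i \<in> {..<length (snd a)}. snd a ! i = fst q \<and> replace_at a i (snd q) \<in> Sa} = N1 q"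
        unfolding N1_def
      proof (intro arg_cong[where f=card] set_eqI iffI)
        fix i assume "i \<in> {i \<in> {..<length (snd a)}. snd a ! i = fst q \<and> replace_at a i (snd q) \<in> Sa}"
        then show "i \<in> {i. i < length (snd a) \<and> snd a ! i = fst q \<and> pcat b (replace_at a i (snd q)) = d}"
          by (auto simp: Sa_def)
      next
        fix i assume i: "i \<in> {i. i < length (snd a) \<and> snd a ! i = fst q \<and> pcat b (replace_at a i (snd q)) = d}"
        have qq: "(fst q, snd q) \<in> ?Q" using q by simp
        have rp: "wlk src tgt (fst (replace_at a i (snd q))) (snd (replace_at a i (snd q)))"
             "ptgt tgt (replace_at a i (snd q)) = ptgt tgt a"
          using conjunct1[OF replace_props[OF a, of i "fst q" "snd q"]] conjunct2[OF replace_props[OF a, of i "fst q" "snd q"]] i qq by auto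
        then show "i \<in> {i \<in> {..<length (snd a)}. snd a ! i = fst q \<and> replace_at a i (snd q) \<in> Sa}"
          using i B_pcat_right[of d b "replace_at a i (snd q)"] dB rp(1) ba by (auto simp: Sa_def)
      qed
    qed
    finally show ?thesis .
  qed
  have r1: "lm (Df f b) (bas a) d = (\<Sum>q\<in>?Q. f q * of_nat (N2 q))"
  proof -
    have "lm (Df f b) (bas a) d = (\<Sum>b'\<in>BB. if ptgt tgt a = psrc b' \<and> pcat b' a = d then Df f b b' else 0)"
      using a dB by (simp add: lam_bas_right)
    also have "\<dots> = (\<Sum>b'\<in>Sb. Df f b b')"
      unfolding Sb_def using finB by (simp add: sum.inter_filter)
    also have "\<dots> = (\<Sum>b'\<in>Sb. \<Sum>q\<in>?Q. f q * of_nat (card {i \<in> {..<length (snd b)}. snd b ! i = fst q \<and> replace_at b i (snd q) = b'}))"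
      unfolding Df_def2 by (intro sum.cong refl arg_cong[where f=card] arg_cong[where f=of_nat] arg_cong2[where f="(*)"])
        (auto simp: Sb_def)
    also have "\<dots> = (\<Sum>q\<in>?Q. f q * of_nat (\<Sum>b'\<in>Sb. card {i \<in> {..<length (snd b)}. snd b ! i = fst q \<and> replace_at b i (snd q) = b'}))"
      by (rule swap)
    also have "\<dots> = (\<Sum>q\<in>?Q. f q * of_nat (card {i \<in> {..<length (snd b)}. snd b ! i = fst q \<and> replace_at b i (snd q) \<in> Sb}))"
      by (intro sum.cong refl arg_cong2[where f="(*)"] arg_cong[where f=of_nat] sum_card_fiber finSb finite_lessThan)
    also have "\<dots> = (\<Sum>q\<in>?Q. f q * of_nat (N2 q))"
    proof (intro sum.cong refl arg_cong[where f=of_nat] arg_cong2[where f="(*)"])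
      fix q assume q: "q \<in> ?Q"
      show "card {i \<in> {..<length (snd b)}. snd b ! i = fst q \<and> replace_at b i (snd q) \<in> Sb} = N2 q"
        unfolding N2_def
      proof (intro arg_cong[where f=card] set_eqI iffI)
        fix i assume "i \<in> {i \<in> {..<length (snd b)}. snd b ! i = fst q \<and> replace_at b i (snd q) \<in> Sb}"
        then show "i \<in> {j. j < length (snd b) \<and> snd b ! j = fst q \<and> pcat (replace_at b j (snd q)) a = d}"
          by (auto simp: Sb_def)
      next
        fix i assume i: "i \<in> {j. j < length (snd b) \<and> snd b ! j = fst q \<and> pcat (replace_at b j (snd q)) a = d}"
        have qq: "(fst q, snd q) \<in> ?Q" using q by simp
        have rp: "wlk src tgt (fst (replace_at b i (snd q))) (snd (replace_at b i (snd q)))"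
             "fst (replace_at b i (snd q)) = fst b"
          using conjunct1[OF replace_props[OF b, of i "fst q" "snd q"]] conjunct2[OF replace_props[OF b, of i "fst q" "snd q"]] i qq by auto
        then show "i \<in> {i \<in> {..<length (snd b)}. snd b ! i = fst q \<and> replace_at b i (snd q) \<in> Sb}"
          using i B_pcat_left[of d "replace_at b i (snd q)" a] dB rp(1) ba by (auto simp: Sb_def psrc_def)
      qed
    qed
    finally show ?thesis .
  qed
  show ?thesis using lhs r1 r2 by simp
qed


lemma psi1_Df:
  fixes f :: "'a \<times> ('v,'a) path \<Rightarrow> 'k::field"
  assumes "z \<in> Z"
  shows "psi1 src tgt Z f (z, d) = Df f z d"
  using assms by (simp add: psi1_def Df_def case_prod_beta)

lemma Df_zero:
  fixes f :: "'a \<times> ('v,'a) path \<Rightarrow> 'k::field"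
  assumes fK: "f \<in> Ker_psi1 src tgt Z" and pw: "wlk src tgt (fst p) (snd p)" and pB: "p \<notin> BB"
  shows "Df f p d = 0"
proof (cases "d \<in> BB")
  case False then show ?thesis by (simp add: Df_notB)
next
  case dB: True
  obtain z xs ys where z: "z \<in> Z" and ps: "snd p = xs @ snd z @ ys"
    using pB pw inB_iff by blast
  let ?zs = "snd z"
  have zw: "wlk src tgt (fst z) (snd z)" using Z_props[OF z] by simp
  have dnot: "\<And>us vs. snd d \<noteq> us @ ?zs @ vs" using dB z inB_iff by blast
  define P where "P q i = (snd p ! i = fst q \<and> replace_at p i (snd q) = d)" for q i
  have c: "card {i. i < length (snd p) \<and> snd p ! i = fst q \<and> replace_at p i (snd q) = d \<and> d \<in> BB}
      = card {j. j < length ?zs \<and> P q (length xs + j)}" for q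
  proof -
    have "card {i. i < length (snd p) \<and> snd p ! i = fst q \<and> replace_at p i (snd q) = d \<and> d \<in> BB}
        = card {i. i < length xs + (length ?zs + length ys) \<and> P q i}"
      using dB ps by (simp add: P_def)
    also have "\<dots> = card {i. i < length xs \<and> P q i} + (card {j. j < length ?zs \<and> P q (length xs + j)}
        + card {k. k < length ys \<and> P q (length xs + (length ?zs + k))})"
      by (simp add: card_split)
    also have "{i. i < length xs \<and> P q i} = {}"
    proof -
      have "False" if "i < length xs" "P q i" for i
      proof -
        have "snd d = (take i xs @ snd (snd q) @ drop (Suc i) xs) @ ?zs @ ys"
          using that ps by (auto simp: P_def replace_at_def)
        then show False using dnot by blast
      qed
      then show ?thesis by auto
    qed
    also have "{k. k < length ys \<and> P q (length xs + (length ?zs + k))} = {}"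
    proof -
      have "False" if "k < length ys" "P q (length xs + (length ?zs + k))" for k
      proof -
        have "snd d = xs @ ?zs @ (take k ys @ snd (snd q) @ drop (Suc k) ys)"
          using that ps by (auto simp: P_def replace_at_def)
        then show False using dnot by blast
      qed
      then show ?thesis by auto
    qed
    finally show ?thesis by simp
  qed
  have mid: "replace_at p (length xs + j) g = (fst p, xs @ snd (replace_at z j g) @ ys)" if "j < length ?zs" for j g
    using that ps by (simp add: replace_at_def)
  show ?thesis
  proof (cases "\<exists>w. d = (fst p, xs @ w @ ys)")
    case False
    have "{j. j < length ?zs \<and> P q (length xs + j)} = {}" for q
      using False mid by (auto simp: P_def)
    then have e: "card {j. j < length ?zs \<and> P q (length xs + j)} = 0" for q by (simp only: card.empty)
    show ?thesis unfolding Df_def2 c e by simp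
  next
    case True
    then obtain w where w: "d = (fst p, xs @ w @ ys)" by blast
    have "{j. j < length ?zs \<and> P q (length xs + j)} =
          {j. j < length ?zs \<and> ?zs ! j = fst q \<and> replace_at z j (snd q) = (fst z, w) \<and> (fst z, w) \<in> BB}"
      if q: "q \<in> Q1B src tgt Z" for q
    proof (intro set_eqI iffI)
      fix j assume j: "j \<in> {j. j < length ?zs \<and> P q (length xs + j)}"
      then have j0: "j < length ?zs" "P q (length xs + j)" by auto
      then have jj: "j < length ?zs" "?zs ! j = fst q" "snd (replace_at z j (snd q)) = w"
        using ps w mid[OF j0(1), of "snd q"] by (auto simp: P_def nth_append)
      have rz: "replace_at z j (snd q) = (fst z, w)" using jj(3) by (simp add: replace_at_def prod_eq_iff)
      have "wlk src tgt (fst z) (snd (replace_at (fst z, ?zs) j (snd q)))"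
        using replace_wlk[OF zw jj(1,2)] q by simp
      then have "wlk src tgt (fst z) w" using jj(3) by simp
      then have "(fst z, w) \<in> BB" using B_infix_closed[of d xs w ys "fst z"] dB w by simp
      then show "j \<in> {j. j < length ?zs \<and> ?zs ! j = fst q \<and> replace_at z j (snd q) = (fst z, w) \<and> (fst z, w) \<in> BB}"
        using jj rz by simp
    next
      fix j assume j: "j \<in> {j. j < length ?zs \<and> ?zs ! j = fst q \<and> replace_at z j (snd q) = (fst z, w) \<and> (fst z, w) \<in> BB}"
      then have j0: "j < length ?zs" by auto
      show "j \<in> {j. j < length ?zs \<and> P q (length xs + j)}"
        using j ps w mid[OF j0, of "snd q"] by (auto simp: P_def nth_append)
    qed
    then have "Df f p d = Df f z (fst z, w)"
      unfolding Df_def2 c by (intro sum.cong refl) simp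
    also have "\<dots> = psi1 src tgt Z f (z, (fst z, w))" by (rule psi1_Df[OF z, symmetric])
    also have "\<dots> = 0" using fK by (simp add: Ker_psi1_def)
    finally show ?thesis .
  qed
qed


lemma vtx_B: "(v, []) \<in> BB"
proof -
  have "\<not> (\<exists>z\<in>Z. \<exists>xs ys. [] = xs @ snd z @ ys)" using Z_props by fastforce
  then show ?thesis using inB_iff by simp
qed

lemma vtx_bas: "vtx v = bas (v, [])"
  by (rule ext) (simp add: vtx_def bas_def)

lemma Df_vertex: "Df f (v, []) d = 0"
  by (simp add: Df_def2)

definition Lf :: "('a \<times> ('v,'a) path \<Rightarrow> 'k::field) \<Rightarrow> (('v,'a) path \<Rightarrow> 'k) \<Rightarrow> (('v,'a) path \<Rightarrow> 'k)" where
  "Lf f x = (\<lambda>p. \<Sum>d\<in>BB. x d * Df f d p)"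

definition phi :: "('a \<times> ('v,'a) path \<Rightarrow> 'k::field) \<Rightarrow> (('v,'a) path \<Rightarrow> 'k) \<Rightarrow> (('v,'a) path \<Rightarrow> 'k)" where
  "phi f x = (if x \<in> LL then Lf f x else (\<lambda>_. 0))"

lemma Lf_bas: "b \<in> BB \<Longrightarrow> Lf f (bas b) = Df f b"
proof (rule ext)
  fix p assume b: "b \<in> BB"
  have "(\<Sum>d\<in>BB. bas b d * Df f d p) = (\<Sum>d\<in>BB. if d = b then Df f b p else 0)"
    by (intro sum.cong) (auto simp: bas_def)
  also have "\<dots> = Df f b p" using b finB by (simp add: sum.delta')
  finally show "Lf f (bas b) p = Df f b p" by (simp add: Lf_def)
qed

lemma Lf_Lam: "Lf f x \<in> LL"
  by (auto simp: Lam_def Lf_def Df_notB)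

lemma Lf_sum:
  assumes "finite I"
  shows "Lf f (\<lambda>d. \<Sum>i\<in>I. c i * u i d) p = (\<Sum>i\<in>I. c i * Lf f (u i) p)"
  unfolding Lf_def
  by (simp add: sum_distrib_right sum_distrib_left mult.assoc sum.swap[where A=I])

lemma Lf_add: "Lf f (\<lambda>p. x p + y p) = (\<lambda>p. Lf f x p + Lf f y p)"
  by (rule ext) (simp add: Lf_def distrib_right sum.distrib)

lemma Lf_smult: "Lf f (\<lambda>p. c * x p) = (\<lambda>p. c * Lf f x p)"
  by (rule ext) (simp add: Lf_def sum_distrib_left mult.assoc)

lemma Lf_zero: "Lf f (\<lambda>_. 0) = (\<lambda>_. 0)"
  by (rule ext) (simp add: Lf_def)

lemma wlk_pcat:
  assumes "wlk src tgt (fst a) (snd a)" "wlk src tgt (fst b) (snd b)" "ptgt tgt a = psrc b"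
  shows "wlk src tgt (fst (pcat b a)) (snd (pcat b a))"
  using assms by (simp add: pcat_def ptgt_endv psrc_def)

lemma Leib_basis:
  fixes f :: "'a \<times> ('v,'a) path \<Rightarrow> 'k::field"
  assumes fK: "f \<in> Ker_psi1 src tgt Z" and b: "b \<in> BB" and a: "a \<in> BB"
  shows "Lf f (lm (bas b) (bas a)) = (\<lambda>p. lm (Df f b) (bas a) p + lm (bas b) (Df f a) p)"
proof (cases "ptgt tgt a = psrc b")
  case True
  note L = Leib_comb[OF b a True, of f]
  show ?thesis
  proof (cases "pcat b a \<in> BB")
    case True2: True
    then show ?thesis using L True by (simp add: lam_bas_ind[OF b a] Lf_bas[OF True2] fun_eq_iff)
  next
    case False
    have "wlk src tgt (fst (pcat b a)) (snd (pcat b a))"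
      using wlk_pcat[OF B_wlk[OF a] B_wlk[OF b] True] .
    then have "Df f (pcat b a) p = 0" for p using Df_zero[OF fK _ False] by blast
    then show ?thesis using L True False by (simp add: lam_bas_ind[OF b a] Lf_zero)
  qed
next
  case False
  have z1: "lm (Df f b) (bas a) p = 0" for p
  proof -
    have "(if ptgt tgt a = psrc b' \<and> pcat b' a = p then Df f b b' else 0) = 0" for b'
    proof (cases "Df f b b' = 0")
      case False2: False
      then have "fst b' = fst b" using Df_nz[OF False2 B_wlk[OF b]] by blast
      then show ?thesis using False by (auto simp: psrc_def)
    qed simp
    then show ?thesis using a by (simp add: lam_bas_right)
  qed
  have z2: "lm (bas b) (Df f a) p = 0" for p
  proof -
    have "(if ptgt tgt a' = psrc b \<and> pcat b a' = p then Df f a a' else 0) = 0" for a'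
    proof (cases "Df f a a' = 0")
      case False2: False
      then have "ptgt tgt a' = ptgt tgt a" using Df_nz[OF False2 B_wlk[OF a]] by blast
      then show ?thesis using False by auto
    qed simp
    then show ?thesis using b by (simp add: lam_bas_left)
  qed
  show ?thesis using False z1 z2 by (simp add: lam_bas_ind[OF b a] Lf_zero)
qed

lemma Leib_full:
  fixes f :: "'a \<times> ('v,'a) path \<Rightarrow> 'k::field"
  assumes fK: "f \<in> Ker_psi1 src tgt Z" and x: "x \<in> LL" and y: "y \<in> LL"
  shows "Lf f (lm x y) = (\<lambda>p. lm (Lf f x) y p + lm x (Lf f y) p)"
proof (rule ext)
  fix p
  let ?X = "\<lambda>p. \<Sum>b\<in>BB. x b * bas b p" and ?Y = "\<lambda>p. \<Sum>a\<in>BB. y a * bas a p"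
  have xe: "x = ?X" and ye: "y = ?Y" using Lam_expand x y by blast+
  have lmxy: "lm x y = (\<lambda>d. \<Sum>b\<in>BB. x b * (\<Sum>a\<in>BB. y a * lm (bas b) (bas a) d))"
  proof -
    have "lm x y = lm ?X y" using xe by simp
    also have "\<dots> = (\<lambda>d. \<Sum>b\<in>BB. x b * lm (bas b) y d)" using finB by (rule lm_sum_left)
    also have "\<dots> = (\<lambda>d. \<Sum>b\<in>BB. x b * lm (bas b) ?Y d)" using ye by simp
    also have "\<dots> = (\<lambda>d. \<Sum>b\<in>BB. x b * (\<Sum>a\<in>BB. y a * lm (bas b) (bas a) d))"
      using finB by (simp add: lm_sum_right)
    finally show ?thesis .
  qed
  have "Lf f (lm x y) p = (\<Sum>b\<in>BB. x b * Lf f (\<lambda>d. \<Sum>a\<in>BB. y a * lm (bas b) (bas a) d) p)"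
    unfolding lmxy using finB by (rule Lf_sum)
  also have "\<dots> = (\<Sum>b\<in>BB. x b * (\<Sum>a\<in>BB. y a * Lf f (lm (bas b) (bas a)) p))"
    using finB by (simp add: Lf_sum)
  also have "\<dots> = (\<Sum>b\<in>BB. x b * (\<Sum>a\<in>BB. y a * (lm (Df f b) (bas a) p + lm (bas b) (Df f a) p)))"
    using Leib_basis[OF fK] by simp
  also have "\<dots> = (\<Sum>b\<in>BB. x b * (\<Sum>a\<in>BB. y a * lm (Df f b) (bas a) p))
                 + (\<Sum>b\<in>BB. x b * (\<Sum>a\<in>BB. y a * lm (bas b) (Df f a) p))"
    by (simp add: distrib_left sum.distrib)
  also have "(\<Sum>b\<in>BB. x b * (\<Sum>a\<in>BB. y a * lm (Df f b) (bas a) p)) = lm (Lf f x) y p"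
  proof -
    have "lm (Lf f x) y = (\<lambda>d. \<Sum>b\<in>BB. x b * lm (Df f b) y d)"
      unfolding Lf_def using finB by (rule lm_sum_left)
    also have "\<dots> = (\<lambda>d. \<Sum>b\<in>BB. x b * lm (Df f b) ?Y d)" using ye by simp
    also have "\<dots> = (\<lambda>d. \<Sum>b\<in>BB. x b * (\<Sum>a\<in>BB. y a * lm (Df f b) (bas a) d))"
      using finB by (simp add: lm_sum_right)
    finally show ?thesis by simp
  qed
  also have "(\<Sum>b\<in>BB. x b * (\<Sum>a\<in>BB. y a * lm (bas b) (Df f a) p)) = lm x (Lf f y) p"
  proof -
    have "lm x (Lf f y) = lm ?X (Lf f y)" using xe by simp
    also have "\<dots> = (\<lambda>d. \<Sum>b\<in>BB. x b * lm (bas b) (Lf f y) d)" using finB by (rule lm_sum_left)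
    also have "\<dots> = (\<lambda>d. \<Sum>b\<in>BB. x b * (\<Sum>a\<in>BB. y a * lm (bas b) (Df f a) d))"
      unfolding Lf_def using finB by (simp add: lm_sum_right)
    finally show ?thesis by simp
  qed
  finally show "Lf f (lm x y) p = lm (Lf f x) y p + lm x (Lf f y) p" .
qed

lemma phi_Der:
  fixes f :: "'a \<times> ('v,'a) path \<Rightarrow> 'k::field"
  assumes fK: "f \<in> Ker_psi1 src tgt Z"
  shows "phi f \<in> Der_E src tgt Z"
proof -
  have vz: "Lf f (vtx v) = (\<lambda>_. 0)" for v
    by (rule ext) (simp add: vtx_bas Lf_bas[OF vtx_B] Df_vertex)
  have vL: "(vtx v :: ('v,'a) path \<Rightarrow> 'k) \<in> LL" for v by (simp add: vtx_bas bas_Lam vtx_B)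
  have leib: "phi f (lm x y) = (\<lambda>p. lm (phi f x) y p + lm x (phi f y) p)" if "x \<in> LL" "y \<in> LL" for x y
  proof -
    have "lm x y \<in> LL" by (rule lm_Lam)
    then show ?thesis using Leib_full[OF fK that] that by (simp add: phi_def)
  qed
  show ?thesis unfolding Der_E_def
  proof (intro CollectI conjI ballI allI impI)
    show "phi f x \<in> LL" if "x \<in> LL" for x using Lf_Lam[of f x] that by (simp add: phi_def)
    show "phi f x = (\<lambda>_. 0)" if "x \<notin> LL" for x using that by (simp add: phi_def)
    show "phi f (\<lambda>p. x p + y p) = (\<lambda>p. phi f x p + phi f y p)" if "x \<in> LL" "y \<in> LL" for x y
      using that add_Lam[OF that] by (simp add: phi_def Lf_add)
    show "phi f (\<lambda>p. c * x p) = (\<lambda>p. c * phi f x p)" if "x \<in> LL" for x c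
      using that smult_Lam[OF that] by (simp add: phi_def Lf_smult)
    show "phi f (lm x y) = (\<lambda>p. lm (phi f x) y p + lm x (phi f y) p)" if "x \<in> LL" "y \<in> LL" for x y
      using leib[OF that] .
    show "phi f (lm (vtx v) x) = lm (vtx v) (phi f x)" if "x \<in> LL" for x v
      using leib[OF vL that] vL vz by (simp add: phi_def lm_zero_left)
    show "phi f (lm x (vtx v)) = lm (phi f x) (vtx v)" if "x \<in> LL" for x v
      using leib[OF that vL] vL vz by (simp add: phi_def lm_zero_right)
  qed
qed


lemma sum_Lam: "finite I \<Longrightarrow> (\<And>i. i \<in> I \<Longrightarrow> u i \<in> LL) \<Longrightarrow> (\<lambda>p. \<Sum>i\<in>I. c i * u i p) \<in> LL"
  by (auto simp: Lam_def intro!: sum.neutral)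

lemma Der_in: "D \<in> Der_E src tgt Z \<Longrightarrow> x \<in> LL \<Longrightarrow> D x \<in> LL"
  unfolding Der_E_def by blast
lemma Der_out: "D \<in> Der_E src tgt Z \<Longrightarrow> x \<notin> LL \<Longrightarrow> D x = (\<lambda>_. 0)"
  unfolding Der_E_def by blast
lemma Der_add: "D \<in> Der_E src tgt Z \<Longrightarrow> x \<in> LL \<Longrightarrow> y \<in> LL \<Longrightarrow> D (\<lambda>p. x p + y p) = (\<lambda>p. D x p + D y p)"
  unfolding Der_E_def by blast
lemma Der_smult: "D \<in> Der_E src tgt Z \<Longrightarrow> x \<in> LL \<Longrightarrow> D (\<lambda>p. c * x p) = (\<lambda>p. c * D x p)"
  unfolding Der_E_def by blast
lemma Der_zero: "D \<in> Der_E src tgt Z \<Longrightarrow> D (\<lambda>_. 0) = (\<lambda>_. 0)"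
  using Der_smult[OF _ zero_Lam, of D 0] by simp

lemma Der_leib: "D \<in> Der_E src tgt Z \<Longrightarrow> x \<in> LL \<Longrightarrow> y \<in> LL \<Longrightarrow> D (lm x y) = (\<lambda>p. lm (D x) y p + lm x (D y) p)"
  unfolding Der_E_def by blast
lemma Der_vl: "D \<in> Der_E src tgt Z \<Longrightarrow> x \<in> LL \<Longrightarrow> D (lm (vtx v) x) = lm (vtx v) (D x)"
  unfolding Der_E_def by blast
lemma Der_vr: "D \<in> Der_E src tgt Z \<Longrightarrow> x \<in> LL \<Longrightarrow> D (lm x (vtx v)) = lm (D x) (vtx v)"
  unfolding Der_E_def by blast

lemma Der_sum:
  assumes D: "D \<in> Der_E src tgt Z" and I: "finite I" and u: "\<And>i. i \<in> I \<Longrightarrow> u i \<in> LL"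
  shows "D (\<lambda>p. \<Sum>i\<in>I. c i * u i p) = (\<lambda>p. \<Sum>i\<in>I. c i * D (u i) p)"
  using I u
proof (induction I rule: finite_induct)
  case empty then show ?case using Der_zero[OF D] by simp
next
  case (insert i I)
  have "D (\<lambda>p. \<Sum>i\<in>insert i I. c i * u i p) = D (\<lambda>p. (\<lambda>p. c i * u i p) p + (\<lambda>p. \<Sum>i\<in>I. c i * u i p) p)"
    using insert by simp
  also have "\<dots> = (\<lambda>p. D (\<lambda>p. c i * u i p) p + D (\<lambda>p. \<Sum>i\<in>I. c i * u i p) p)"
    using insert by (intro Der_add[OF D] smult_Lam sum_Lam) auto
  also have "\<dots> = (\<lambda>p. c i * D (u i) p + (\<Sum>i\<in>I. c i * D (u i) p))"
    using insert Der_smult[OF D, of "u i" "c i"] by simp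
  also have "\<dots> = (\<lambda>p. \<Sum>i\<in>insert i I. c i * D (u i) p)" using insert by simp
  finally show ?case .
qed

lemma vtx_L: "(vtx v :: ('v,'a) path \<Rightarrow> 'k::field) \<in> LL"
  by (simp add: vtx_bas bas_Lam vtx_B)

lemma Der_vtx:
  assumes D: "D \<in> Der_E src tgt Z"
  shows "D (vtx v :: ('v,'a) path \<Rightarrow> 'k::field) = (\<lambda>_. 0)"
proof -
  let ?e = "vtx v :: ('v,'a) path \<Rightarrow> 'k"
  have ee: "lm ?e ?e = ?e"
    using lam_bas_ind[OF vtx_B vtx_B, of v v] by (simp add: vtx_bas pcat_def ptgt_def psrc_def vtx_B)
  have 1: "D ?e = (\<lambda>p. lm (D ?e) ?e p + lm ?e (D ?e) p)" using Der_leib[OF D vtx_L[of v] vtx_L[of v]] ee by simp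
  have 2: "D ?e = lm ?e (D ?e)" using Der_vl[OF D vtx_L[of v], of v] ee by simp
  have 3: "D ?e = lm (D ?e) ?e" using Der_vr[OF D vtx_L[of v], of v] ee by simp
  show ?thesis
  proof
    fix p
    have a: "D ?e p = lm (D ?e) ?e p + lm ?e (D ?e) p" using fun_cong[OF 1, of p] by simp
    have b: "lm ?e (D ?e) p = D ?e p" using fun_cong[OF 2, of p] by simp
    have c: "lm (D ?e) ?e p = D ?e p" using fun_cong[OF 3, of p] by simp
    have "D ?e p = D ?e p + D ?e p" using a unfolding b c .
    then show "D ?e p = 0" by (metis add.right_neutral add_left_cancel)
  qed
qed

lemma arrow_B: "arrow_path src b \<in> BB"
proof -
  have "\<not> (\<exists>z\<in>Z. \<exists>xs ys. [b] = xs @ snd z @ ys)"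
  proof
    assume "\<exists>z\<in>Z. \<exists>xs ys. [b] = xs @ snd z @ ys"
    then obtain z xs ys where z: "z \<in> Z" and e: "[b] = xs @ snd z @ ys" by blast
    have "length [b] = length (xs @ snd z @ ys)" using e by simp
    then show False using Z_props[OF z] by simp
  qed
  then show ?thesis by (simp add: inB_iff arrow_path_def)
qed

end




context quiv
begin

lemma lm_vtx_left:
  "lm (vtx t) y d = (if d \<in> BB \<and> ptgt tgt d = t then y d else 0)"
proof -
  have "(\<Sum>a\<in>BB. if ptgt tgt a = psrc (t, []::'a list) \<and> pcat (t, []) a = d then y a else 0)
      = (\<Sum>a\<in>BB. if a = d then (if ptgt tgt d = t then y d else 0) else 0)"
    by (intro sum.cong refl) (auto simp: psrc_def pcat_def)
  also have "\<dots> = (if d \<in> BB then (if ptgt tgt d = t then y d else 0) else 0)" using finB by (simp add: sum.delta')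
  finally have e: "(\<Sum>a\<in>BB. if ptgt tgt a = psrc (t, []::'a list) \<and> pcat (t, []) a = d then y a else 0)
     = (if d \<in> BB then (if ptgt tgt d = t then y d else 0) else 0)" .
  have "lm (vtx t) y d = (if d \<in> BB then (\<Sum>a\<in>BB. if ptgt tgt a = psrc (t, []::'a list) \<and> pcat (t, []) a = d then y a else 0) else 0)"
    unfolding vtx_bas by (rule lam_bas_left[OF vtx_B])
  then show ?thesis using e by simp
qed

lemma lm_vtx_right:
  "lm y (vtx s) d = (if d \<in> BB \<and> fst d = s then y d else 0)"
proof -
  have "(\<Sum>b\<in>BB. if ptgt tgt (s, []) = psrc b \<and> pcat b (s, []) = d then y b else 0)
      = (\<Sum>b\<in>BB. if b = d then (if fst d = s then y d else 0) else 0)"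
    by (intro sum.cong refl) (auto simp: psrc_def pcat_def ptgt_def)
  also have "\<dots> = (if d \<in> BB then (if fst d = s then y d else 0) else 0)" using finB by (simp add: sum.delta')
  finally have e: "(\<Sum>b\<in>BB. if ptgt tgt (s, []) = psrc b \<and> pcat b (s, []) = d then y b else 0)
     = (if d \<in> BB then (if fst d = s then y d else 0) else 0)" .
  have "lm y (vtx s) d = (if d \<in> BB then (\<Sum>b\<in>BB. if ptgt tgt (s, []) = psrc b \<and> pcat b (s, []) = d then y b else 0) else 0)"
    unfolding vtx_bas by (rule lam_bas_right[OF vtx_B])
  then show ?thesis using e by simp
qed

lemma Der_arrow_support:
  fixes D :: "(('v,'a) path \<Rightarrow> 'k::field) \<Rightarrow> (('v,'a) path \<Rightarrow> 'k)"
  assumes D: "D \<in> Der_E src tgt Z" and nz: "D (bas (arrow_path src b)) d \<noteq> 0"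
  shows "(b, d) \<in> Q1B src tgt Z"
proof -
  let ?A = "arrow_path src b"
  have AL: "(bas ?A :: ('v,'a) path \<Rightarrow> 'k) \<in> LL" by (rule bas_Lam[OF arrow_B])
  have l: "lm (vtx (tgt b)) (bas ?A) = (bas ?A :: ('v,'a) path \<Rightarrow> 'k)"
    using lam_bas_ind[OF vtx_B arrow_B, of "tgt b" b] arrow_B
    by (simp add: vtx_bas arrow_path_def pcat_def ptgt_def psrc_def)
  have r: "lm (bas ?A) (vtx (src b)) = (bas ?A :: ('v,'a) path \<Rightarrow> 'k)"
    using lam_bas_ind[OF arrow_B vtx_B, of b "src b"] arrow_B
    by (simp add: vtx_bas arrow_path_def pcat_def ptgt_def psrc_def)
  have h1: "D (bas ?A) = lm (vtx (tgt b)) (D (bas ?A))" using Der_vl[OF D AL, of "tgt b"] l by simp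
  have "D (bas ?A) d = (if d \<in> BB \<and> ptgt tgt d = tgt b then D (bas ?A) d else 0)"
    using fun_cong[OF h1, of d] unfolding lm_vtx_left .
  then have 1: "d \<in> BB \<and> ptgt tgt d = tgt b" using nz by (auto split: if_splits)
  have h2: "D (bas ?A) = lm (D (bas ?A)) (vtx (src b))" using Der_vr[OF D AL, of "src b"] r by simp
  have "D (bas ?A) d = (if d \<in> BB \<and> fst d = src b then D (bas ?A) d else 0)"
    using fun_cong[OF h2, of d] unfolding lm_vtx_right .
  then have 2: "fst d = src b" using nz by (auto split: if_splits)
  show ?thesis using 1 2 by (simp add: Q1B_iff)
qed

lemma Df_arrow:
  fixes f :: "'a \<times> ('v,'a) path \<Rightarrow> 'k::field"
  shows "Df f (arrow_path src b) d = (if (b, d) \<in> Q1B src tgt Z then f (b, d) else 0)"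
proof -
  have "card {i. i < length (snd (arrow_path src b)) \<and> snd (arrow_path src b) ! i = fst q \<and>
            replace_at (arrow_path src b) i (snd q) = d \<and> d \<in> BB} = (if q = (b, d) then 1 else 0)"
    if q: "q \<in> Q1B src tgt Z" for q
  proof -
    have fq: "fst (snd q) = src (fst q)" "snd q \<in> BB" using q by (auto simp: Q1B_iff[of "fst q" "snd q", simplified])
    have e1: "{i. i < length (snd (arrow_path src b)) \<and> snd (arrow_path src b) ! i = fst q \<and>
            replace_at (arrow_path src b) i (snd q) = d \<and> d \<in> BB}
          = (if fst q = b \<and> (src b, snd (snd q)) = d \<and> d \<in> BB then {0} else {})"
      by (auto simp: arrow_path_def replace_at_def)
    have e2: "(fst q = b \<and> (src b, snd (snd q)) = d \<and> d \<in> BB) \<longleftrightarrow> q = (b, d)"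
    proof
      assume h: "fst q = b \<and> (src b, snd (snd q)) = d \<and> d \<in> BB"
      then have "snd q = d" using fq by (auto simp: prod_eq_iff)
      then show "q = (b, d)" using h by (simp add: prod_eq_iff)
    next
      assume h: "q = (b, d)"
      then have "d = (src b, snd (snd q))" using fq by (auto simp: prod_eq_iff)
      then show "fst q = b \<and> (src b, snd (snd q)) = d \<and> d \<in> BB" using h fq by simp
    qed
    have e: "{i. i < length (snd (arrow_path src b)) \<and> snd (arrow_path src b) ! i = fst q \<and>
            replace_at (arrow_path src b) i (snd q) = d \<and> d \<in> BB}
          = (if q = (b, d) then {0} else {})" using e1 e2 by simp
    show ?thesis unfolding e by simp
  qed
  then have "Df f (arrow_path src b) d = (\<Sum>q\<in>Q1B src tgt Z. if q = (b, d) then f q else 0)"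
    unfolding Df_def2 by (intro sum.cong refl) simp
  also have "\<dots> = (if (b, d) \<in> Q1B src tgt Z then f (b, d) else 0)"
    using finite_subset[of "Q1B src tgt Z" "UNIV \<times> BB"] finB by (simp add: sum.delta' Q1B_iff subset_iff)
  finally show ?thesis .
qed

definition fD :: "((('v,'a) path \<Rightarrow> 'k::field) \<Rightarrow> (('v,'a) path \<Rightarrow> 'k)) \<Rightarrow> ('a \<times> ('v,'a) path \<Rightarrow> 'k)" where
  "fD D q = (if q \<in> Q1B src tgt Z then D (bas (arrow_path src (fst q))) (snd q) else 0)"

lemma D_arrow_Df:
  fixes D :: "(('v,'a) path \<Rightarrow> 'k::field) \<Rightarrow> (('v,'a) path \<Rightarrow> 'k)"
  assumes D: "D \<in> Der_E src tgt Z"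
  shows "D (bas (arrow_path src b)) = Df (fD D) (arrow_path src b)"
proof
  fix d show "D (bas (arrow_path src b)) d = Df (fD D) (arrow_path src b) d"
    using Der_arrow_support[OF D, of b d] by (auto simp: Df_arrow fD_def)
qed

lemma D_bas:
  fixes D :: "(('v,'a) path \<Rightarrow> 'k::field) \<Rightarrow> (('v,'a) path \<Rightarrow> 'k)"
  assumes D: "D \<in> Der_E src tgt Z"
  shows "p \<in> BB \<Longrightarrow> D (bas p) = Df (fD D) p"
proof (induction "snd p" arbitrary: p rule: rev_induct)
  case Nil
  then have pe: "p = (fst p, [])" by (metis prod.collapse)
  have "D (bas (fst p, [])) = Df (fD D) (fst p, [])"
    using Der_vtx[OF D, of "fst p"] by (simp add: vtx_bas Df_vertex fun_eq_iff)
  then show ?case using pe by metis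
next
  case (snoc b as)
  let ?v = "fst p"
  have p: "p = (?v, as @ [b])" using snoc(2) by (metis prod.collapse)
  have w: "wlk src tgt ?v (as @ [b])" using B_wlk[OF snoc(3)] snoc(2) by simp
  then have w0: "wlk src tgt ?v as" and sb: "src b = endv tgt ?v as" by auto
  have p0B: "(?v, as) \<in> BB" using B_infix_closed[OF snoc(3), of "[]" as "[b]" ?v] snoc(2) w0 by simp
  have IH: "D (bas (?v, as)) = Df (fD D) (?v, as)" using snoc(1)[of "(?v, as)"] p0B by simp
  have comp: "ptgt tgt (?v, as) = psrc (arrow_path src b)" using sb by (simp add: ptgt_endv psrc_def arrow_path_def)
  have pc: "pcat (arrow_path src b) (?v, as) = p" using p by (simp add: pcat_def arrow_path_def)
  have "(bas p :: ('v,'a) path \<Rightarrow> 'k) = lm (bas (arrow_path src b)) (bas (?v, as))"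
    using comp pc snoc(3) by (simp add: lam_bas_ind[OF arrow_B p0B])
  then have "D (bas p) = (\<lambda>d. lm (D (bas (arrow_path src b))) (bas (?v, as)) d + lm (bas (arrow_path src b)) (D (bas (?v, as))) d)"
    using Der_leib[OF D bas_Lam[OF arrow_B] bas_Lam[OF p0B]] by simp
  also have "\<dots> = Df (fD D) (pcat (arrow_path src b) (?v, as))"
    unfolding IH D_arrow_Df[OF D, of b] using Leib_comb[OF arrow_B p0B comp, of "fD D"] by (simp add: fun_eq_iff)
  finally show ?case using pc by simp
qed

lemma fD_Ker:
  fixes D :: "(('v,'a) path \<Rightarrow> 'k::field) \<Rightarrow> (('v,'a) path \<Rightarrow> 'k)"
  assumes D: "D \<in> Der_E src tgt Z"
  shows "fD D \<in> Ker_psi1 src tgt Z"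
proof -
  have "Df (fD D) p d = 0" if pZ: "p \<in> Z" for p d
  proof -
    have pw: "wlk src tgt (fst p) (snd p)" and pl: "length (snd p) \<ge> 2" using Z_props[OF pZ] by auto
    then obtain a1 rest where sp: "snd p = a1 # rest" and rne: "rest \<noteq> []"
      by (cases "snd p"; cases "tl (snd p)") auto
    have fp: "fst p = src a1" and rw: "wlk src tgt (tgt a1) rest" using pw sp by auto
    let ?p1 = "arrow_path src a1" and ?p2 = "(tgt a1, rest)"
    have p2B: "?p2 \<in> BB"
    proof -
      have "\<not> (\<exists>z\<in>Z. \<exists>xs ys. rest = xs @ snd z @ ys)"
      proof
        assume "\<exists>z\<in>Z. \<exists>xs ys. rest = xs @ snd z @ ys"
        then obtain z xs ys where z: "z \<in> Z" "rest = xs @ snd z @ ys" by blast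
        then have "snd p = (a1 # xs) @ snd z @ ys" using sp by simp
        then have "subpath src tgt z p" using subpath_infix[OF z(1) pw] by blast
        then have "z = p" using minZ z(1) pZ unfolding minimal_relations_def by blast
        have "length rest = length xs + length (snd z) + length ys" using z(2) by simp
        then show False using sp \<open>z = p\<close> by simp
      qed
      then show ?thesis using rw by (simp add: inB_iff)
    qed
    have "snd p = [] @ snd p @ []" by simp
    then have pnB: "p \<notin> BB" using pZ inB_iff by blast
    have comp: "ptgt tgt ?p1 = psrc ?p2" by (simp add: ptgt_def psrc_def arrow_path_def)
    have pc: "pcat ?p2 ?p1 = p" using sp fp by (simp add: pcat_def arrow_path_def prod_eq_iff)
    have "lm (bas ?p2) (bas ?p1) = (\<lambda>_. 0 :: 'k)" using pc pnB by (simp add: lam_bas_ind[OF p2B arrow_B])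
    then have "(\<lambda>_. 0) = D (lm (bas ?p2) (bas ?p1))" using Der_zero[OF D] by simp
    also have "\<dots> = (\<lambda>d. lm (D (bas ?p2)) (bas ?p1) d + lm (bas ?p2) (D (bas ?p1)) d)"
      using Der_leib[OF D bas_Lam[OF p2B] bas_Lam[OF arrow_B]] by simp
    also have "\<dots> = Df (fD D) (pcat ?p2 ?p1)"
      unfolding D_bas[OF D p2B] D_bas[OF D arrow_B] using Leib_comb[OF p2B arrow_B comp, of "fD D"] by (simp add: fun_eq_iff)
    finally have "Df (fD D) p = (\<lambda>_. 0)" using pc by simp
    then show ?thesis by simp
  qed
  note dz = this
  have "psi1 src tgt Z (fD D) = (\<lambda>_. 0)"
  proof (rule ext)
    fix pd :: "('v,'a) path \<times> ('v,'a) path"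
    obtain p d where pd: "pd = (p, d)" by (cases pd)
    show "psi1 src tgt Z (fD D) pd = 0"
    proof (cases "p \<in> Z")
      case True then show ?thesis using dz[OF True, of d] psi1_Df[OF True, of "fD D" d] pd by simp
    next
      case False then show ?thesis using pd by (simp add: psi1_def)
    qed
  qed
  moreover have "fD D \<in> kQ1B src tgt Z" by (simp add: kQ1B_def fD_def)
  ultimately show ?thesis by (simp add: Ker_psi1_def)
qed

lemma phi_fD:
  fixes D :: "(('v,'a) path \<Rightarrow> 'k::field) \<Rightarrow> (('v,'a) path \<Rightarrow> 'k)"
  assumes D: "D \<in> Der_E src tgt Z"
  shows "phi (fD D) = D"
proof
  fix x
  show "phi (fD D) x = D x"
  proof (cases "x \<in> LL")
    case True
    have "phi (fD D) x = (\<lambda>p. \<Sum>d\<in>BB. x d * D (bas d) p)"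
      using True D_bas[OF D] by (simp add: phi_def Lf_def)
    also have "\<dots> = D (\<lambda>p. \<Sum>d\<in>BB. x d * bas d p)"
      by (rule Der_sum[OF D finB bas_Lam, symmetric])
    also have "\<dots> = D x" using Lam_expand[OF True] by simp
    finally show ?thesis .
  next
    case False then show ?thesis using Der_out[OF D False] by (simp add: phi_def)
  qed
qed

lemma fD_phi:
  fixes f :: "'a \<times> ('v,'a) path \<Rightarrow> 'k::field"
  assumes f: "f \<in> kQ1B src tgt Z"
  shows "fD (phi f) = f"
proof
  fix q :: "'a \<times> ('v,'a) path"
  obtain b d where q: "q = (b, d)" by (cases q)
  show "fD (phi f) q = f q"
  proof (cases "q \<in> Q1B src tgt Z")
    case True
    have "(bas (arrow_path src b) :: ('v,'a) path \<Rightarrow> 'k) \<in> LL" by (rule bas_Lam[OF arrow_B])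
    then show ?thesis using True Lf_bas[OF arrow_B, of f b]
      by (simp add: q fD_def phi_def Df_arrow)
  next
    case False
    then have "f q = 0" using f unfolding kQ1B_def by blast
    then show ?thesis using False by (simp add: fD_def)
  qed
qed


end




context quiv
begin

lemma comm_Der:
  fixes D1 D2 :: "(('v,'a) path \<Rightarrow> 'k::field) \<Rightarrow> (('v,'a) path \<Rightarrow> 'k)"
  assumes D1: "D1 \<in> Der_E src tgt Z" and D2: "D2 \<in> Der_E src tgt Z"
  shows "commutator D1 D2 \<in> Der_E src tgt Z"
  unfolding Der_E_def
proof (intro CollectI conjI ballI allI impI)
  fix x :: "('v,'a) path \<Rightarrow> 'k"
  assume x: "x \<in> LL"
  show "commutator D1 D2 x \<in> LL"
    unfolding commutator_def by (intro diff_Lam Der_in[OF D1] Der_in[OF D2] x)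
  fix y :: "('v,'a) path \<Rightarrow> 'k"
  assume y: "y \<in> LL"
  show "commutator D1 D2 (\<lambda>p. x p + y p) = (\<lambda>p. commutator D1 D2 x p + commutator D1 D2 y p)"
  proof -
    have a1: "D1 (D2 (\<lambda>p. x p + y p)) = (\<lambda>p. D1 (D2 x) p + D1 (D2 y) p)"
      using Der_add[OF D2 x y] Der_add[OF D1 Der_in[OF D2 x] Der_in[OF D2 y]] by simp
    have a2: "D2 (D1 (\<lambda>p. x p + y p)) = (\<lambda>p. D2 (D1 x) p + D2 (D1 y) p)"
      using Der_add[OF D1 x y] Der_add[OF D2 Der_in[OF D1 x] Der_in[OF D1 y]] by simp
    show ?thesis unfolding commutator_def a1 a2 by (simp add: algebra_simps)
  qed
  show "commutator D1 D2 (lm x y) = (\<lambda>p. lm (commutator D1 D2 x) y p + lm x (commutator D1 D2 y) p)"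
  proof -
    have l1: "D1 (D2 (lm x y)) = (\<lambda>p. (lm (D1 (D2 x)) y p + lm (D2 x) (D1 y) p) + (lm (D1 x) (D2 y) p + lm x (D1 (D2 y)) p))"
    proof -
      have "D1 (D2 (lm x y)) = D1 (\<lambda>p. lm (D2 x) y p + lm x (D2 y) p)" using Der_leib[OF D2 x y] by simp
      also have "\<dots> = (\<lambda>p. D1 (lm (D2 x) y) p + D1 (lm x (D2 y)) p)" using Der_add[OF D1 lm_Lam lm_Lam] by simp
      also have "\<dots> = (\<lambda>p. (lm (D1 (D2 x)) y p + lm (D2 x) (D1 y) p) + (lm (D1 x) (D2 y) p + lm x (D1 (D2 y)) p))"
        using Der_leib[OF D1 Der_in[OF D2 x] y] Der_leib[OF D1 x Der_in[OF D2 y]] by simp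
      finally show ?thesis .
    qed
    have l2: "D2 (D1 (lm x y)) = (\<lambda>p. (lm (D2 (D1 x)) y p + lm (D1 x) (D2 y) p) + (lm (D2 x) (D1 y) p + lm x (D2 (D1 y)) p))"
    proof -
      have "D2 (D1 (lm x y)) = D2 (\<lambda>p. lm (D1 x) y p + lm x (D1 y) p)" using Der_leib[OF D1 x y] by simp
      also have "\<dots> = (\<lambda>p. D2 (lm (D1 x) y) p + D2 (lm x (D1 y)) p)" using Der_add[OF D2 lm_Lam lm_Lam] by simp
      also have "\<dots> = (\<lambda>p. (lm (D2 (D1 x)) y p + lm (D1 x) (D2 y) p) + (lm (D2 x) (D1 y) p + lm x (D2 (D1 y)) p))"
        using Der_leib[OF D2 Der_in[OF D1 x] y] Der_leib[OF D2 x Der_in[OF D1 y]] by simp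
      finally show ?thesis .
    qed
    show ?thesis unfolding commutator_def l1 l2 lm_diff_left lm_diff_right by (simp add: algebra_simps)
  qed
next
  fix x :: "('v,'a) path \<Rightarrow> 'k"
  assume x: "x \<notin> LL"
  show "commutator D1 D2 x = (\<lambda>_. 0)"
    unfolding commutator_def using Der_out[OF D1 x] Der_out[OF D2 x] Der_zero[OF D1] Der_zero[OF D2] by simp
next
  fix c :: 'k and x :: "('v,'a) path \<Rightarrow> 'k"
  assume x: "x \<in> LL"
  have a1: "D1 (D2 (\<lambda>p. c * x p)) = (\<lambda>p. c * D1 (D2 x) p)"
    using Der_smult[OF D2 x] Der_smult[OF D1 Der_in[OF D2 x]] by simp
  have a2: "D2 (D1 (\<lambda>p. c * x p)) = (\<lambda>p. c * D2 (D1 x) p)"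
    using Der_smult[OF D1 x] Der_smult[OF D2 Der_in[OF D1 x]] by simp
  show "commutator D1 D2 (\<lambda>p. c * x p) = (\<lambda>p. c * commutator D1 D2 x p)"
    unfolding commutator_def a1 a2 by (simp add: algebra_simps)
next
  fix v and x :: "('v,'a) path \<Rightarrow> 'k"
  assume x: "x \<in> LL"
  have a1: "D1 (D2 (lm (vtx v) x)) = lm (vtx v) (D1 (D2 x))"
    using Der_vl[OF D2 x] Der_vl[OF D1 Der_in[OF D2 x]] by simp
  have a2: "D2 (D1 (lm (vtx v) x)) = lm (vtx v) (D2 (D1 x))"
    using Der_vl[OF D1 x] Der_vl[OF D2 Der_in[OF D1 x]] by simp
  show "commutator D1 D2 (lm (vtx v) x) = lm (vtx v) (commutator D1 D2 x)"
    unfolding commutator_def a1 a2 lm_diff_right by simp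
  have b1: "D1 (D2 (lm x (vtx v))) = lm (D1 (D2 x)) (vtx v)"
    using Der_vr[OF D2 x] Der_vr[OF D1 Der_in[OF D2 x]] by simp
  have b2: "D2 (D1 (lm x (vtx v))) = lm (D2 (D1 x)) (vtx v)"
    using Der_vr[OF D1 x] Der_vr[OF D2 Der_in[OF D1 x]] by simp
  show "commutator D1 D2 (lm x (vtx v)) = lm (commutator D1 D2 x) (vtx v)"
    unfolding commutator_def b1 b2 lm_diff_left by simp
qed

lemma finite_Q1B: "finite (Q1B src tgt Z)"
proof -
  have "Q1B src tgt Z \<subseteq> UNIV \<times> BB" by (auto simp: Q1B_iff)
  moreover have "finite ((UNIV :: 'a set) \<times> BB)" using finB by simp
  ultimately show ?thesis by (rule finite_subset)
qed

lemma Q1B_sum_fst: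
  "(\<Sum>q\<in>Q1B src tgt Z. if fst q = c then h (snd q) else 0) = (\<Sum>e\<in>BB. if (c, e) \<in> Q1B src tgt Z then h e else 0)"
proof -
  have "(\<Sum>q\<in>Q1B src tgt Z. if fst q = c then h (snd q) else 0) = (\<Sum>q\<in>{q\<in>Q1B src tgt Z. fst q = c}. h (snd q))"
    using finite_Q1B by (simp add: sum.inter_filter)
  also have "{q\<in>Q1B src tgt Z. fst q = c} = Pair c ` {e\<in>BB. (c, e) \<in> Q1B src tgt Z}"
    by (auto simp: Q1B_iff image_iff)
  also have "(\<Sum>q\<in>Pair c ` {e\<in>BB. (c, e) \<in> Q1B src tgt Z}. h (snd q)) = (\<Sum>e\<in>{e\<in>BB. (c, e) \<in> Q1B src tgt Z}. h e)"
    by (subst sum.reindex) (auto simp: inj_on_def)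
  also have "\<dots> = (\<Sum>e\<in>BB. if (c, e) \<in> Q1B src tgt Z then h e else 0)"
    using finB by (simp add: sum.inter_filter)
  finally show ?thesis .
qed

lemma bracket_alt:
  fixes f g :: "'a \<times> ('v,'a) path \<Rightarrow> 'k::field"
  shows "bracket src tgt Z f g (c, d) =
     (\<Sum>e\<in>BB. (if (c, e) \<in> Q1B src tgt Z then g (c, e) else 0) * Df f e d)
   - (\<Sum>e\<in>BB. (if (c, e) \<in> Q1B src tgt Z then f (c, e) else 0) * Df g e d)"
proof -
  let ?Q = "Q1B src tgt Z"
  have "bracket src tgt Z f g (c, d) =
     (\<Sum>q1\<in>?Q. \<Sum>q2\<in>?Q. f q1 * g q2 * (if c = fst q2 then repl src tgt Z (snd q2) (fst q1) (snd q1) d else 0))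
   - (\<Sum>q1\<in>?Q. \<Sum>q2\<in>?Q. f q1 * g q2 * (if c = fst q1 then repl src tgt Z (snd q1) (fst q2) (snd q2) d else 0))"
    by (simp add: bracket_def case_prod_beta right_diff_distrib sum_subtractf)
  also have "(\<Sum>q1\<in>?Q. \<Sum>q2\<in>?Q. f q1 * g q2 * (if c = fst q2 then repl src tgt Z (snd q2) (fst q1) (snd q1) d else 0))
     = (\<Sum>q2\<in>?Q. if fst q2 = c then g (c, snd q2) * Df f (snd q2) d else 0)"
  proof -
    have "(\<Sum>q1\<in>?Q. \<Sum>q2\<in>?Q. f q1 * g q2 * (if c = fst q2 then repl src tgt Z (snd q2) (fst q1) (snd q1) d else 0))
       = (\<Sum>q2\<in>?Q. \<Sum>q1\<in>?Q. f q1 * g q2 * (if c = fst q2 then repl src tgt Z (snd q2) (fst q1) (snd q1) d else 0))"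
      by (rule sum.swap)
    also have "\<dots> = (\<Sum>q2\<in>?Q. if fst q2 = c then g (c, snd q2) * Df f (snd q2) d else 0)"
    proof (rule sum.cong[OF refl])
      fix q2 assume "q2 \<in> ?Q"
      show "(\<Sum>q1\<in>?Q. f q1 * g q2 * (if c = fst q2 then repl src tgt Z (snd q2) (fst q1) (snd q1) d else 0))
          = (if fst q2 = c then g (c, snd q2) * Df f (snd q2) d else 0)"
      proof (cases "fst q2 = c")
        case True
        then have "g q2 = g (c, snd q2)" by (metis prod.collapse)
        then show ?thesis using True by (simp add: Df_def sum_distrib_left ac_simps)
      qed simp
    qed
    finally show ?thesis .
  qed
  also have "(\<Sum>q1\<in>?Q. \<Sum>q2\<in>?Q. f q1 * g q2 * (if c = fst q1 then repl src tgt Z (snd q1) (fst q2) (snd q2) d else 0))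
     = (\<Sum>q1\<in>?Q. if fst q1 = c then f (c, snd q1) * Df g (snd q1) d else 0)"
  proof (rule sum.cong[OF refl])
    fix q1 assume "q1 \<in> ?Q"
    show "(\<Sum>q2\<in>?Q. f q1 * g q2 * (if c = fst q1 then repl src tgt Z (snd q1) (fst q2) (snd q2) d else 0))
        = (if fst q1 = c then f (c, snd q1) * Df g (snd q1) d else 0)"
    proof (cases "fst q1 = c")
      case True
      then have "f q1 = f (c, snd q1)" by (metis prod.collapse)
      then show ?thesis using True by (simp add: Df_def sum_distrib_left ac_simps)
    qed simp
  qed
  finally have "bracket src tgt Z f g (c, d) =
     (\<Sum>e\<in>BB. if (c, e) \<in> Q1B src tgt Z then g (c, e) * Df f e d else 0)
   - (\<Sum>e\<in>BB. if (c, e) \<in> Q1B src tgt Z then f (c, e) * Df g e d else 0)"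
    by (simp add: Q1B_sum_fst[of c "\<lambda>e. g (c, e) * Df f e d"] Q1B_sum_fst[of c "\<lambda>e. f (c, e) * Df g e d"])
  moreover have "(\<Sum>e\<in>BB. (if (c, e) \<in> Q1B src tgt Z then g (c, e) else 0) * Df f e d)
      = (\<Sum>e\<in>BB. if (c, e) \<in> Q1B src tgt Z then g (c, e) * Df f e d else 0)"
    by (intro sum.cong) auto
  moreover have "(\<Sum>e\<in>BB. (if (c, e) \<in> Q1B src tgt Z then f (c, e) else 0) * Df g e d)
      = (\<Sum>e\<in>BB. if (c, e) \<in> Q1B src tgt Z then f (c, e) * Df g e d else 0)"
    by (intro sum.cong) auto
  ultimately show ?thesis by simp
qed

lemma comm_arrow:
  fixes f g :: "'a \<times> ('v,'a) path \<Rightarrow> 'k::field"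
  shows "commutator (phi f) (phi g) (bas (arrow_path src c)) d = bracket src tgt Z f g (c, d)"
proof -
  have AL: "(bas (arrow_path src c) :: ('v,'a) path \<Rightarrow> 'k) \<in> LL" by (rule bas_Lam[OF arrow_B])
  have pg: "phi g (bas (arrow_path src c)) = Df g (arrow_path src c)"
    using AL Lf_bas[OF arrow_B] by (simp add: phi_def)
  have pf: "phi f (bas (arrow_path src c)) = Df f (arrow_path src c)"
    using AL Lf_bas[OF arrow_B] by (simp add: phi_def)
  have LG: "Df g (arrow_path src c) \<in> LL" using Lf_Lam[of g "bas (arrow_path src c)"] Lf_bas[OF arrow_B, of g c] by simp
  have LF: "Df f (arrow_path src c) \<in> LL" using Lf_Lam[of f "bas (arrow_path src c)"] Lf_bas[OF arrow_B, of f c] by simp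
  show ?thesis
    unfolding commutator_def pg pf bracket_alt using LG LF
    by (simp add: phi_def Lf_def Df_arrow if_distrib cong: if_cong)
qed

lemma bracket_phi:
  fixes f g :: "'a \<times> ('v,'a) path \<Rightarrow> 'k::field"
  assumes f: "f \<in> Ker_psi1 src tgt Z" and g: "g \<in> Ker_psi1 src tgt Z"
  shows "phi (bracket src tgt Z f g) = commutator (phi f) (phi g)"
proof -
  let ?C = "commutator (phi f) (phi g)"
  have C: "?C \<in> Der_E src tgt Z" by (rule comm_Der[OF phi_Der[OF f] phi_Der[OF g]])
  have "fD ?C = bracket src tgt Z f g"
  proof (rule ext)
    fix q :: "'a \<times> ('v,'a) path"
    obtain c d where q: "q = (c, d)" by (cases q)
    show "fD ?C q = bracket src tgt Z f g q"
    proof (cases "q \<in> Q1B src tgt Z")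
      case True then show ?thesis using comm_arrow[of f g c d] q by (simp add: fD_def)
    next
      case False
      then have "?C (bas (arrow_path src c)) d = 0" using Der_arrow_support[OF C, of c d] q by blast
      then show ?thesis using comm_arrow[of f g c d] q False by (simp add: fD_def)
    qed
  qed
  then show ?thesis using phi_fD[OF C] by simp
qed

lemma phi_add: "phi (\<lambda>q. f q + g q) = (\<lambda>x p. phi f x p + phi g x p)"
proof (intro ext)
  fix x p
  have "Df (\<lambda>q. f q + g q) d p = Df f d p + Df g d p" for d
    by (simp add: Df_def distrib_right sum.distrib)
  then show "phi (\<lambda>q. f q + g q) x p = phi f x p + phi g x p"
    by (simp add: phi_def Lf_def distrib_left sum.distrib)
qed

lemma phi_smult: "phi (\<lambda>q. c * f q) = (\<lambda>x p. c * phi f x p)"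
proof (intro ext)
  fix x p
  have "Df (\<lambda>q. c * f q) d p = c * Df f d p" for d
    by (simp add: Df_def sum_distrib_left mult.assoc)
  then show "phi (\<lambda>q. c * f q) x p = c * phi f x p"
    by (simp add: phi_def Lf_def sum_distrib_left mult.left_commute)
qed

end

theorem proposition1p8:
  fixes src tgt :: "'a::finite \<Rightarrow> 'v::finite"
    and Z :: "('v,'a) path set"
  assumes "minimal_relations src tgt Z"
    and "finite (Bpaths src tgt Z)"
  shows "\<exists>\<phi> :: ('a \<times> ('v,'a) path \<Rightarrow> 'k::alg_closed_field) \<Rightarrow>
                 ((('v,'a) path \<Rightarrow> 'k) \<Rightarrow> (('v,'a) path \<Rightarrow> 'k)).
           bij_betw \<phi> (Ker_psi1 src tgt Z) (Der_E src tgt Z) \<and>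
           (\<forall>f\<in>Ker_psi1 src tgt Z. \<forall>g\<in>Ker_psi1 src tgt Z.
              \<phi> (\<lambda>q. f q + g q) = (\<lambda>x p. \<phi> f x p + \<phi> g x p)) \<and>
           (\<forall>c. \<forall>f\<in>Ker_psi1 src tgt Z. \<phi> (\<lambda>q. c * f q) = (\<lambda>x p. c * \<phi> f x p)) \<and>
           (\<forall>f\<in>Ker_psi1 src tgt Z. \<forall>g\<in>Ker_psi1 src tgt Z.
              \<phi> (bracket src tgt Z f g) = commutator (\<phi> f) (\<phi> g))"
proof -
  have Q: "quiv src tgt Z" using assms by (rule quiv.intro)
  let ?phi = "quiv.phi src tgt Z :: ('a \<times> ('v,'a) path \<Rightarrow> 'k) \<Rightarrow> _"
  have K: "f \<in> kQ1B src tgt Z" if "f \<in> Ker_psi1 src tgt Z" for f :: "'a \<times> ('v,'a) path \<Rightarrow> 'k"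
    using that by (simp add: Ker_psi1_def)
  have inj: "inj_on ?phi (Ker_psi1 src tgt Z)"
  proof (rule inj_onI)
    fix f g :: "'a \<times> ('v,'a) path \<Rightarrow> 'k"
    assume f: "f \<in> Ker_psi1 src tgt Z" and g: "g \<in> Ker_psi1 src tgt Z" and e: "?phi f = ?phi g"
    have "f = quiv.fD src tgt Z (?phi f)" using quiv.fD_phi[OF Q K[OF f]] by simp
    also have "\<dots> = quiv.fD src tgt Z (?phi g)" using e by simp
    also have "\<dots> = g" using quiv.fD_phi[OF Q K[OF g]] by simp
    finally show "f = g" .
  qed
  have img: "?phi ` Ker_psi1 src tgt Z = Der_E src tgt Z"
  proof
    show "?phi ` Ker_psi1 src tgt Z \<subseteq> Der_E src tgt Z" using quiv.phi_Der[OF Q] by blast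
    show "Der_E src tgt Z \<subseteq> ?phi ` Ker_psi1 src tgt Z"
    proof
      fix D :: "(('v,'a) path \<Rightarrow> 'k) \<Rightarrow> (('v,'a) path \<Rightarrow> 'k)"
      assume D: "D \<in> Der_E src tgt Z"
      have "D = ?phi (quiv.fD src tgt Z D)" using quiv.phi_fD[OF Q D] by simp
      then show "D \<in> ?phi ` Ker_psi1 src tgt Z" using quiv.fD_Ker[OF Q D] by blast
    qed
  qed
  show ?thesis
  proof (intro exI[of _ ?phi] conjI ballI allI)
    show "bij_betw ?phi (Ker_psi1 src tgt Z) (Der_E src tgt Z)" using inj img by (simp add: bij_betw_def)
    show "?phi (\<lambda>q. f q + g q) = (\<lambda>x p. ?phi f x p + ?phi g x p)" for f g
      by (rule quiv.phi_add[OF Q])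
    show "?phi (\<lambda>q. c * f q) = (\<lambda>x p. c * ?phi f x p)" for c f
      by (rule quiv.phi_smult[OF Q])
    show "?phi (bracket src tgt Z f g) = commutator (?phi f) (?phi g)"
      if "f \<in> Ker_psi1 src tgt Z" "g \<in> Ker_psi1 src tgt Z" for f g
      by (rule quiv.bracket_phi[OF Q that])
  qed
qed

end
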